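(* Consider the problem and the UCGS algorithm described in the context, where $f$ has $\nu$-Hölder continuous gradient with constant $M_\nu$, and run UCGS with parameters $$\beta_k=L_k\gamma_k,\qquad \eta_k=\frac{L_k\gamma_kD_X^2}{k},\qquad \varepsilon_k=\frac{\sigma L_k\gamma_k^2D_X^2}{2},$$ and, inside each call of the ACGM procedure (with $\beta=\beta_k$), tolerances $\delta^t=\sigma\beta_kD_X^2/t$ and exact line-search step sizes $\alpha^t\in\arg\min_{\alpha\in[0,1]}\phi((1-\alpha)u^{t-1}+\alpha v^t)$, where $\sigma\ge0$. Then UCGS terminates with an $\varepsilon$-solution after at most $N_{\mathrm{grad}}$ gradient evaluations and $N_{\mathrm{lin}}$ linear objective optimizations, where $$N_{\mathrm{grad}}:=\Big\lceil16\Big(\frac{(3+\sigma)^{\frac{1+\nu}{2}}M_\nu D_X^{1+\nu}}{\varepsilon}\Big)^{\frac{2}{1+3\nu}}\Big\rceil,\qquad N_{\mathrm{lin}}:=\Big\lceil\Big(\tfrac72\sigma+3\Big)N_{\mathrm{grad}}^2+\Big(\tfrac72\sigma+6\Big)N_{\mathrm{grad}}\Big\rceil.$$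
   Context: Problem: $\min_{x\in X}f(x)$, where $X\subset\mathbb{R}^n$ is nonempty, compact, convex, with diameter $D_X=\max_{x,y\in X}\|x-y\|$ (Euclidean norm), and $f$ is convex and differentiable with $\|\nabla f(x)-\nabla f(y)\|\le M_\nu\|x-y\|^\nu$ for all $x,y\in X$, for some $\nu\in[0,1]$, $M_\nu>0$ (unknown to the algorithm). Let $f^*=\min_X f$; $y\in X$ is an $\varepsilon$-solution if $f(y)-f^*\le\varepsilon$. ACGM procedure with input $(g,u,\beta,\eta)$, $u\in X$: with $\phi(x)=\langle g,x\rangle+\frac\beta2\|x-u\|^2$, set $u^0=u$; for $t=1,2,\dots$ compute $v^t\in X$ with $\langle\nabla\phi(u^{t-1}),v^t-x\rangle\le\delta^t$ for all $x\in X$ (one linear objective optimization); if $\langle\nabla\phi(u^{t-1}),u^{t-1}-v^t\rangle\le\eta-\delta^t$ output $u^{t-1}$, else $u^t=(1-\alpha^t)u^{t-1}+\alpha^tv^t$. UCGS (universal conditional gradient sliding) with accuracy $\varepsilon>0$, start $x_0\in X$, $y_0:=x_0$: at outer iteration $k=1,2,\dots$ (one gradient evaluation $\nabla f(z_k)$ counted per outer iteration), for a trial $L_k>0$ set $\gamma_1=1$ and, for $k\ge2$, $\gamma_k\in(0,1]$ solving $L_k\gamma_k^2/k=\Gamma_{k-1}(1-\gamma_k)$; $\Gamma_k:=L_k\gamma_k^2/k$; $z_k=(1-\gamma_k)y_{k-1}+\gamma_kx_{k-1}$; $x_k:=$ output of ACGM with $g=\nabla f(z_k)$, $u=x_{k-1}$,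 $\beta=\beta_k$, $\eta=\eta_k$; $y_k=(1-\gamma_k)y_{k-1}+\gamma_kx_k$; the trial $L_k$ is accepted iff $f(y_k)\le f(z_k)+\langle\nabla f(z_k),y_k-z_k\rangle+\frac{L_k}{2}\|y_k-z_k\|^2+\frac{\varepsilon}{2}\gamma_k$, $L_k$ being found by backtracking (doubling trial values) so that the inequality fails with $L_k$ replaced by $L_k/2$. Then with $\ell_k(x):=\Gamma_k\sum_{i=1}^k\frac{\gamma_i}{\Gamma_i}(f(z_i)+\langle\nabla f(z_i),x-z_i\rangle)$, compute (by one linear objective optimization) $s_k\in X$ with $\ell_k(s_k)\le\min_{x\in X}\ell_k(x)+\varepsilon_k$, and stop with output $y_k$ if $f(y_k)-\ell_k(s_k)\le\varepsilon-\varepsilon_k$. *)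

theory Defs
  imports "HOL-Analysis.Analysis"
begin

definition acgm_phi :: "'a::real_inner \<Rightarrow> 'a \<Rightarrow> real \<Rightarrow> 'a \<Rightarrow> real" where
  "acgm_phi g u \<beta> w = inner g w + \<beta> / 2 * (norm (w - u))^2"

definition acgm_grad :: "'a::real_inner \<Rightarrow> 'a \<Rightarrow> real \<Rightarrow> 'a \<Rightarrow> 'a" where
  "acgm_grad g u \<beta> w = g + \<beta> *\<^sub>R (w - u)"

definition acgm_delta :: "real \<Rightarrow> real \<Rightarrow> real \<Rightarrow> nat \<Rightarrow> real" where
  "acgm_delta \<sigma> \<beta> D t = \<sigma> * \<beta> * D^2 / real t"

text \<open>A (partial) ACGM execution performing t linear optimizations (v^1..v^t),
  where the stopping test failed at steps 1..t-1 and exact line search was used.\<close>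
definition acgm_steps ::
  "'a::real_inner set \<Rightarrow> real \<Rightarrow> real \<Rightarrow> 'a \<Rightarrow> 'a \<Rightarrow> real \<Rightarrow> real
    \<Rightarrow> (nat \<Rightarrow> 'a) \<Rightarrow> (nat \<Rightarrow> 'a) \<Rightarrow> nat \<Rightarrow> bool" where
  "acgm_steps X \<sigma> D g u \<beta> \<eta> us vs t \<longleftrightarrow>
     us 0 = u \<and>
     (\<forall>j\<in>{1..t}. vs j \<in> X \<and>
        (\<forall>w\<in>X. inner (acgm_grad g u \<beta> (us (j-1))) (vs j - w) \<le> acgm_delta \<sigma> \<beta> D j)) \<and>
     (\<forall>j\<in>{1..<t}.
        inner (acgm_grad g u \<beta> (us (j-1))) (us (j-1) - vs j) > \<eta> - acgm_delta \<sigma> \<beta> D j \<and>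
        (\<exists>\<alpha>\<in>{0..1}.
           (\<forall>a\<in>{0..1}. acgm_phi g u \<beta> ((1-\<alpha>) *\<^sub>R us (j-1) + \<alpha> *\<^sub>R vs j)
                         \<le> acgm_phi g u \<beta> ((1-a) *\<^sub>R us (j-1) + a *\<^sub>R vs j)) \<and>
           us j = (1-\<alpha>) *\<^sub>R us (j-1) + \<alpha> *\<^sub>R vs j))"

definition acgm_run ::
  "'a::real_inner set \<Rightarrow> real \<Rightarrow> real \<Rightarrow> 'a \<Rightarrow> 'a \<Rightarrow> real \<Rightarrow> real \<Rightarrow> nat \<Rightarrow> 'a \<Rightarrow> bool" where
  "acgm_run X \<sigma> D g u \<beta> \<eta> T out \<longleftrightarrow> 1 \<le> T \<and>
     (\<exists>us vs. acgm_steps X \<sigma> D g u \<beta> \<eta> us vs T \<and>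
        inner (acgm_grad g u \<beta> (us (T-1))) (us (T-1) - vs T) \<le> \<eta> - acgm_delta \<sigma> \<beta> D T \<and>
        out = us (T-1))"

text \<open>gamma-rule for a trial value Lt at iteration k (Gp = Gamma_{k-1}).\<close>
definition ucgs_gamma_ok :: "nat \<Rightarrow> real \<Rightarrow> real \<Rightarrow> real \<Rightarrow> bool" where
  "ucgs_gamma_ok k Gp Lt \<gamma> \<longleftrightarrow> Lt > 0 \<and> 0 < \<gamma> \<and> \<gamma> \<le> 1 \<and>
     (if k = 1 then \<gamma> = 1 else Lt * \<gamma>^2 / real k = Gp * (1 - \<gamma>))"

text \<open>One trial of outer iteration k with trial value Lt, starting from
  x_{k-1} = xp, y_{k-1} = yp; ACGM uses T linear optimizations.\<close>
definition ucgs_trial ::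
  "('a::real_inner \<Rightarrow> 'a) \<Rightarrow> 'a set \<Rightarrow> real \<Rightarrow> real \<Rightarrow> nat \<Rightarrow> real \<Rightarrow> 'a \<Rightarrow> 'a
    \<Rightarrow> real \<Rightarrow> real \<Rightarrow> 'a \<Rightarrow> 'a \<Rightarrow> 'a \<Rightarrow> nat \<Rightarrow> bool" where
  "ucgs_trial G X \<sigma> D k Gp xp yp Lt \<gamma> z xk yk T \<longleftrightarrow>
     ucgs_gamma_ok k Gp Lt \<gamma> \<and>
     z = (1-\<gamma>) *\<^sub>R yp + \<gamma> *\<^sub>R xp \<and>
     acgm_run X \<sigma> D (G z) xp (Lt * \<gamma>) (Lt * \<gamma> * D^2 / real k) T xk \<and>
     yk = (1-\<gamma>) *\<^sub>R yp + \<gamma> *\<^sub>R xk"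

definition ucgs_accept ::
  "('a::real_inner \<Rightarrow> real) \<Rightarrow> ('a \<Rightarrow> 'a) \<Rightarrow> real \<Rightarrow> real \<Rightarrow> real \<Rightarrow> 'a \<Rightarrow> 'a \<Rightarrow> bool" where
  "ucgs_accept f G \<epsilon> Lt \<gamma> z yk \<longleftrightarrow>
     f yk \<le> f z + inner (G z) (yk - z) + Lt / 2 * (norm (yk - z))^2 + \<epsilon> / 2 * \<gamma>"

definition ucgs_Gamma :: "(nat \<Rightarrow> real) \<Rightarrow> (nat \<Rightarrow> real) \<Rightarrow> nat \<Rightarrow> real" where
  "ucgs_Gamma L \<gamma> k = L k * (\<gamma> k)^2 / real k"

definition ucgs_ell ::
  "('a::real_inner \<Rightarrow> real) \<Rightarrow> ('a \<Rightarrow> 'a) \<Rightarrow> (nat \<Rightarrow> real) \<Rightarrow> (nat \<Rightarrow> real) \<Rightarrow> (nat \<Rightarrow> 'a)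
    \<Rightarrow> nat \<Rightarrow> 'a \<Rightarrow> real" where
  "ucgs_ell f G L \<gamma> z k w = ucgs_Gamma L \<gamma> k *
     (\<Sum>i=1..k. \<gamma> i / ucgs_Gamma L \<gamma> i * (f (z i) + inner (G (z i)) (w - z i)))"

definition ucgs_epsk :: "real \<Rightarrow> real \<Rightarrow> (nat \<Rightarrow> real) \<Rightarrow> (nat \<Rightarrow> real) \<Rightarrow> nat \<Rightarrow> real" where
  "ucgs_epsk \<sigma> D L \<gamma> k = \<sigma> * L k * (\<gamma> k)^2 * D^2 / 2"

text \<open>Outer iteration k (accepted trial, the failed trial at L_k/2, and s_k).\<close>
definition ucgs_iter ::
  "('a::real_inner \<Rightarrow> real) \<Rightarrow> ('a \<Rightarrow> 'a) \<Rightarrow> 'a set \<Rightarrow> real \<Rightarrow> real \<Rightarrow> real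
    \<Rightarrow> (nat \<Rightarrow> real) \<Rightarrow> (nat \<Rightarrow> real) \<Rightarrow> (nat \<Rightarrow> 'a) \<Rightarrow> (nat \<Rightarrow> 'a) \<Rightarrow> (nat \<Rightarrow> 'a)
    \<Rightarrow> (nat \<Rightarrow> 'a) \<Rightarrow> (nat \<Rightarrow> nat) \<Rightarrow> nat \<Rightarrow> bool" where
  "ucgs_iter f G X \<sigma> D \<epsilon> L \<gamma> z x y s T k \<longleftrightarrow>
     ucgs_trial G X \<sigma> D k (ucgs_Gamma L \<gamma> (k-1)) (x (k-1)) (y (k-1))
        (L k) (\<gamma> k) (z k) (x k) (y k) (T k) \<and>
     ucgs_accept f G \<epsilon> (L k) (\<gamma> k) (z k) (y k) \<and>
     (\<exists>\<gamma>' z' x' y' T'. ucgs_trial G X \<sigma> D k (ucgs_Gamma L \<gamma> (k-1)) (x (k-1)) (y (k-1))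
          (L k / 2) \<gamma>' z' x' y' T' \<and> \<not> ucgs_accept f G \<epsilon> (L k / 2) \<gamma>' z' y') \<and>
     s k \<in> X \<and>
     (\<forall>w\<in>X. ucgs_ell f G L \<gamma> z k (s k) \<le> ucgs_ell f G L \<gamma> z k w + ucgs_epsk \<sigma> D L \<gamma> k)"

definition ucgs_stop ::
  "('a::real_inner \<Rightarrow> real) \<Rightarrow> ('a \<Rightarrow> 'a) \<Rightarrow> real \<Rightarrow> real \<Rightarrow> real
    \<Rightarrow> (nat \<Rightarrow> real) \<Rightarrow> (nat \<Rightarrow> real) \<Rightarrow> (nat \<Rightarrow> 'a) \<Rightarrow> (nat \<Rightarrow> 'a) \<Rightarrow> (nat \<Rightarrow> 'a)
    \<Rightarrow> nat \<Rightarrow> bool" where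
  "ucgs_stop f G \<sigma> D \<epsilon> L \<gamma> z y s k \<longleftrightarrow>
     f (y k) - ucgs_ell f G L \<gamma> z k (s k) \<le> \<epsilon> - ucgs_epsk \<sigma> D L \<gamma> k"

definition ucgs_prefix ::
  "('a::real_inner \<Rightarrow> real) \<Rightarrow> ('a \<Rightarrow> 'a) \<Rightarrow> 'a set \<Rightarrow> real \<Rightarrow> real \<Rightarrow> real \<Rightarrow> 'a
    \<Rightarrow> (nat \<Rightarrow> real) \<Rightarrow> (nat \<Rightarrow> real) \<Rightarrow> (nat \<Rightarrow> 'a) \<Rightarrow> (nat \<Rightarrow> 'a) \<Rightarrow> (nat \<Rightarrow> 'a)
    \<Rightarrow> (nat \<Rightarrow> 'a) \<Rightarrow> (nat \<Rightarrow> nat) \<Rightarrow> nat \<Rightarrow> bool" where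
  "ucgs_prefix f G X \<sigma> D \<epsilon> x0 L \<gamma> z x y s T K \<longleftrightarrow>
     x 0 = x0 \<and> y 0 = x0 \<and>
     (\<forall>k\<in>{1..K}. ucgs_iter f G X \<sigma> D \<epsilon> L \<gamma> z x y s T k) \<and>
     (\<forall>k\<in>{1..<K}. \<not> ucgs_stop f G \<sigma> D \<epsilon> L \<gamma> z y s k)"

definition N_grad :: "real \<Rightarrow> real \<Rightarrow> real \<Rightarrow> real \<Rightarrow> real \<Rightarrow> nat" where
  "N_grad \<sigma> \<nu> M D \<epsilon> = nat \<lceil>16 * (((3 + \<sigma>) powr ((1 + \<nu>) / 2) * M * D powr (1 + \<nu>)) / \<epsilon>)
                                 powr (2 / (1 + 3 * \<nu>))\<rceil>"

definition N_lin :: "real \<Rightarrow> nat \<Rightarrow> nat" where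
  "N_lin \<sigma> N = nat \<lceil>(7/2 * \<sigma> + 3) * (real N)^2 + (7/2 * \<sigma> + 6) * real N\<rceil>"

end

theory Submission
  imports Defs
begin

lemma line_deriv:
  fixes f :: "'a::real_inner \<Rightarrow> real"
  assumes "(f has_derivative (\<lambda>h. inner (G (a + t *\<^sub>R d)) h)) (at (a + t *\<^sub>R d))"
  shows "((\<lambda>s. f (a + s *\<^sub>R d)) has_real_derivative inner (G (a + t *\<^sub>R d)) d) (at t)"
proof -
  have l: "((\<lambda>s. a + s *\<^sub>R d) has_derivative (\<lambda>h. h *\<^sub>R d)) (at t)"
    by (auto intro!: derivative_eq_intros)
  have "((\<lambda>s. f (a + s *\<^sub>R d)) has_derivative (\<lambda>h. inner (G (a + t *\<^sub>R d)) (h *\<^sub>R d))) (at t)"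
    using has_derivative_compose[OF l assms] by simp
  moreover have "(\<lambda>h. inner (G (a + t *\<^sub>R d)) (h *\<^sub>R d)) = (*) (inner (G (a + t *\<^sub>R d)) d)"
    by (auto simp: mult.commute)
  ultimately show ?thesis unfolding has_field_derivative_def by simp
qed

lemma tangent_le:
  fixes f :: "'a::real_inner \<Rightarrow> real"
  assumes X: "convex X" and fc: "convex_on X f"
    and fg: "\<forall>x\<in>X. (f has_derivative (\<lambda>h. inner (G x) h)) (at x)"
    and a: "a \<in> X" and b: "b \<in> X"
  shows "f a + inner (G a) (b - a) \<le> f b"
proof -
  let ?h = "\<lambda>s. f (a + s *\<^sub>R (b - a))"
  have "(?h has_real_derivative inner (G (a + 0 *\<^sub>R (b - a))) (b - a)) (at 0)"
    by (rule line_deriv) (use fg a in auto)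
  hence D: "(?h has_real_derivative inner (G a) (b - a)) (at 0)" by simp
  hence "((\<lambda>s. (?h s - ?h 0) / (s - 0)) \<longlongrightarrow> inner (G a) (b - a)) (at 0)"
    unfolding has_field_derivative_iff by simp
  hence T: "((\<lambda>s. (?h s - ?h 0) / s) \<longlongrightarrow> inner (G a) (b - a)) (at_right 0)"
    by (simp add: filterlim_at_split)
  have "eventually (\<lambda>s. (?h s - ?h 0) / s \<le> f b - f a) (at_right 0)"
    using eventually_at_right_real[of 0 1, OF zero_less_one]
  proof eventually_elim
    case (elim s)
    hence s: "0 < s" "s < 1" by auto
    have e: "a + s *\<^sub>R (b - a) = (1 - s) *\<^sub>R a + s *\<^sub>R b" by (simp add: algebra_simps)
    have "f ((1 - s) *\<^sub>R a + s *\<^sub>R b) \<le> (1 - s) * f a + s * f b"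
      using convex_onD[OF fc, of s a b] s a b by auto
    hence "?h s - ?h 0 \<le> s * (f b - f a)" using e by (simp add: algebra_simps)
    thus ?case using s by (simp add: divide_le_eq mult.commute)
  qed
  hence "inner (G a) (b - a) \<le> f b - f a"
    using tendsto_upperbound[OF T] by simp
  thus ?thesis by simp
qed

lemma holder_descent:
  fixes f :: "'a::real_inner \<Rightarrow> real"
  assumes X: "convex X"
    and fg: "\<forall>x\<in>X. (f has_derivative (\<lambda>h. inner (G x) h)) (at x)"
    and nu: "0 \<le> \<nu>" and M: "0 \<le> M"
    and holder: "\<forall>x\<in>X. \<forall>y\<in>X. norm (G x - G y) \<le> M * norm (x - y) powr \<nu>"
    and z: "z \<in> X" and y: "y \<in> X"
  shows "f y \<le> f z + inner (G z) (y - z) + M / (1 + \<nu>) * norm (y - z) powr (1 + \<nu>)"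
proof (cases "y = z")
  case True thus ?thesis by simp
next
  case False
  define d where "d = y - z"
  define r where "r = norm d"
  have r: "r > 0" using False by (simp add: r_def d_def)
  define \<psi> where "\<psi> = (\<lambda>t. f (z + t *\<^sub>R d) - t * inner (G z) d - M / (1 + \<nu>) * r powr (1 + \<nu>) * t powr (1 + \<nu>))"
  have inX: "z + t *\<^sub>R d \<in> X" if "0 \<le> t" "t \<le> 1" for t
  proof -
    have "z + t *\<^sub>R d = (1 - t) *\<^sub>R z + t *\<^sub>R y" by (simp add: d_def algebra_simps)
    thus ?thesis using convexD_alt[OF X z y, of t] that by simp
  qed
  have Df: "((\<lambda>s. f (z + s *\<^sub>R d)) has_real_derivative inner (G (z + t *\<^sub>R d)) d) (at t)"
    if "0 \<le> t" "t \<le> 1" for t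
    by (rule line_deriv) (use fg inX that in auto)
  have cont: "continuous_on {0..1} \<psi>"
  proof -
    have c1: "continuous_on {0..1} (\<lambda>s. f (z + s *\<^sub>R d))"
      using Df by (intro continuous_at_imp_continuous_on) (metis DERIV_isCont atLeastAtMost_iff)
    have c2: "continuous_on {0..1} (\<lambda>t::real. t powr (1 + \<nu>))"
      by (rule continuous_on_powr') (use nu in \<open>auto intro: continuous_intros\<close>)
    show ?thesis unfolding \<psi>_def by (intro continuous_intros c1 c2)
  qed
  have Dpsi: "(\<psi> has_real_derivative (inner (G (z + t *\<^sub>R d)) d - inner (G z) d
                 - M / (1 + \<nu>) * r powr (1 + \<nu>) * ((1 + \<nu>) * t powr \<nu>))) (at t)"
    if "0 < t" "t < 1" for t
  proof -
    have "((\<lambda>t. t powr (1 + \<nu>)) has_real_derivative (1 + \<nu>) * t powr (1 + \<nu> - 1)) (at t)"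
      using has_real_derivative_powr[of t "1 + \<nu>"] that by simp
    hence P: "((\<lambda>t. t powr (1 + \<nu>)) has_real_derivative (1 + \<nu>) * t powr \<nu>) (at t)" by simp
    show ?thesis unfolding \<psi>_def
      by (intro derivative_eq_intros Df P) (use that in \<open>auto intro: Df\<close>)
  qed
  obtain l \<xi> where xi: "0 < \<xi>" "\<xi> < 1" "DERIV \<psi> \<xi> :> l" "\<psi> 1 - \<psi> 0 = (1 - 0) * l"
    using MVT[OF zero_less_one cont] Dpsi by (meson real_differentiable_def)
  have l: "l = inner (G (z + \<xi> *\<^sub>R d)) d - inner (G z) d
                 - M / (1 + \<nu>) * r powr (1 + \<nu>) * ((1 + \<nu>) * \<xi> powr \<nu>)"
    using DERIV_unique[OF xi(3) Dpsi[OF xi(1,2)]] .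
  have "inner (G (z + \<xi> *\<^sub>R d)) d - inner (G z) d = inner (G (z + \<xi> *\<^sub>R d) - G z) d"
    by (simp add: inner_diff_left)
  also have "\<dots> \<le> norm (G (z + \<xi> *\<^sub>R d) - G z) * r"
    unfolding r_def by (rule norm_cauchy_schwarz)
  also have "\<dots> \<le> M * norm (\<xi> *\<^sub>R d) powr \<nu> * r"
  proof -
    have "norm (G (z + \<xi> *\<^sub>R d) - G z) \<le> M * norm ((z + \<xi> *\<^sub>R d) - z) powr \<nu>"
    proof -
      have "z + \<xi> *\<^sub>R d \<in> X" using inX[of \<xi>] xi by simp
      thus ?thesis using holder z by blast
    qed
    moreover have "norm ((z + \<xi> *\<^sub>R d) - z) = norm (\<xi> *\<^sub>R d)" by simp
    ultimately have "norm (G (z + \<xi> *\<^sub>R d) - G z) \<le> M * norm (\<xi> *\<^sub>R d) powr \<nu>" by simp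
    thus ?thesis using r by (intro mult_right_mono) auto
  qed
  also have "\<dots> = M * \<xi> powr \<nu> * r powr (1 + \<nu>)"
    using xi r by (simp add: r_def powr_mult powr_add)
  finally have "l \<le> M * \<xi> powr \<nu> * r powr (1 + \<nu>) - M / (1 + \<nu>) * r powr (1 + \<nu>) * ((1 + \<nu>) * \<xi> powr \<nu>)"
    using l by linarith
  also have "\<dots> = 0" using nu by (simp add: field_simps)
  finally have "\<psi> 1 \<le> \<psi> 0" using xi(4) by simp
  thus ?thesis unfolding \<psi>_def d_def r_def by simp
qed

lemma young_holder:
  fixes \<nu> M \<delta> L r :: real
  assumes nu: "0 \<le> \<nu>" "\<nu> \<le> 1" and M: "M > 0" and d: "\<delta> > 0" and r: "r \<ge> 0"
    and L: "L \<ge> M powr (2 / (1 + \<nu>)) * \<delta> powr (- ((1 - \<nu>) / (1 + \<nu>)))"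
  shows "M / (1 + \<nu>) * r powr (1 + \<nu>) \<le> L / 2 * r^2 + \<delta> / 2"
proof -
  have Lpos: "L > 0" using L M d by (smt (verit) mult_pos_pos powr_gt_zero)
  consider "r = 0" | "\<nu> = 1" "r > 0" | "\<nu> < 1" "r > 0" using r nu by linarith
  thus ?thesis
  proof cases
    case 1 thus ?thesis using d by simp
  next
    case 2
    hence "L \<ge> M" using L M d by simp
    moreover have "r powr (1 + \<nu>) = r^2" using 2 by (simp add: powr_realpow)
    moreover have "M * r^2 \<le> L * r^2" using \<open>L \<ge> M\<close> by (simp add: mult_right_mono)
    ultimately have "M / (1 + \<nu>) * r powr (1 + \<nu>) = M / 2 * r^2" "M / 2 * r^2 \<le> L / 2 * r^2" using 2 by auto
    thus ?thesis using d by linarith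
  next
    case 3
    define \<theta> where "\<theta> = (1 + \<nu>) / 2"
    have th: "0 < \<theta>" "\<theta> < 1" "1 - \<theta> > 0" using 3 nu by (auto simp: \<theta>_def)
    define A where "A = L * r^2 / (1 + \<nu>)"
    define B where "B = \<delta> / (1 - \<nu>)"
    have AB: "A > 0" "B > 0" using Lpos 3 nu d by (auto simp: A_def B_def)
    have Y: "A powr \<theta> * B powr (1 - \<theta>) \<le> \<theta> * A + (1 - \<theta>) * B"
      using Youngs_inequality_0[of \<theta> "1 - \<theta>" A B] th AB by simp
    have rhs: "\<theta> * A + (1 - \<theta>) * B = L / 2 * r^2 + \<delta> / 2"
    proof -
      have "\<theta> * A = L / 2 * r^2" using nu by (simp add: \<theta>_def A_def field_simps)
      moreover have "(1 - \<theta>) * B = \<delta> / 2" using 3 by (simp add: \<theta>_def B_def field_simps)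
      ultimately show ?thesis by simp
    qed
    define P where "P = L powr \<theta> * \<delta> powr (1 - \<theta>)"
    have r2: "(r^2) powr \<theta> = r powr (1 + \<nu>)"
    proof -
      have "(r^2) powr \<theta> = (r powr 2) powr \<theta>" using 3 by (simp add: powr_realpow)
      also have "\<dots> = r powr (2 * \<theta>)" by (simp add: powr_powr)
      also have "2 * \<theta> = 1 + \<nu>" by (simp add: \<theta>_def)
      finally show ?thesis .
    qed
    have lhsY: "A powr \<theta> * B powr (1 - \<theta>) = P * r powr (1 + \<nu>) / ((1 + \<nu>) powr \<theta> * (1 - \<nu>) powr (1 - \<theta>))"
      unfolding A_def B_def P_def by (simp add: powr_mult powr_divide r2 field_simps)
    have PM: "P \<ge> M"
    proof -
      have "L powr \<theta> \<ge> (M powr (2 / (1 + \<nu>)) * \<delta> powr (- ((1 - \<nu>) / (1 + \<nu>)))) powr \<theta>"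
        using L th by (intro powr_mono2) auto
      also have "(M powr (2 / (1 + \<nu>)) * \<delta> powr (- ((1 - \<nu>) / (1 + \<nu>)))) powr \<theta>
                 = M * \<delta> powr (- (1 - \<theta>))"
      proof -
        have e1: "2 / (1 + \<nu>) * \<theta> = 1" using nu by (simp add: \<theta>_def)
        have e2: "- ((1 - \<nu>) / (1 + \<nu>)) * \<theta> = - (1 - \<theta>)" using nu by (simp add: \<theta>_def field_simps)
        have "(M powr (2 / (1 + \<nu>)) * \<delta> powr (- ((1 - \<nu>) / (1 + \<nu>)))) powr \<theta>
           = M powr (2 / (1 + \<nu>) * \<theta>) * \<delta> powr (- ((1 - \<nu>) / (1 + \<nu>)) * \<theta>)"
          by (simp only: powr_mult powr_powr)
        thus ?thesis using M by (simp only: e1 e2) simp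
      qed
      finally have "L powr \<theta> \<ge> M * \<delta> powr (- (1 - \<theta>))" .
      hence "P \<ge> M * \<delta> powr (- (1 - \<theta>)) * \<delta> powr (1 - \<theta>)"
        unfolding P_def by (intro mult_right_mono) auto
      also have "M * \<delta> powr (- (1 - \<theta>)) * \<delta> powr (1 - \<theta>) = M"
      proof -
        have "\<delta> powr (- (1 - \<theta>)) * \<delta> powr (1 - \<theta>) = \<delta> powr (- (1 - \<theta>) + (1 - \<theta>))"
          by (simp only: powr_add)
        thus ?thesis using d by simp
      qed
      finally show ?thesis .
    qed
    have den: "(1 + \<nu>) powr \<theta> * (1 - \<nu>) powr (1 - \<theta>) \<le> 1 + \<nu>"
    proof -
      have "(1 - \<nu>) powr (1 - \<theta>) \<le> (1 + \<nu>) powr (1 - \<theta>)"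
        using nu 3 th by (intro powr_mono2) auto
      hence "(1 + \<nu>) powr \<theta> * (1 - \<nu>) powr (1 - \<theta>) \<le> (1 + \<nu>) powr \<theta> * (1 + \<nu>) powr (1 - \<theta>)"
        by (intro mult_left_mono) auto
      also have "\<dots> = 1 + \<nu>" using nu by (simp add: powr_add[symmetric])
      finally show ?thesis .
    qed
    have denpos: "(1 + \<nu>) powr \<theta> * (1 - \<nu>) powr (1 - \<theta>) > 0" using nu 3 by simp
    have "M / (1 + \<nu>) * r powr (1 + \<nu>) = M * r powr (1 + \<nu>) / (1 + \<nu>)" by simp
    also have "\<dots> \<le> P * r powr (1 + \<nu>) / (1 + \<nu>)"
      using PM by (intro divide_right_mono mult_right_mono) (use nu in auto)
    also have "\<dots> \<le> P * r powr (1 + \<nu>) / ((1 + \<nu>) powr \<theta> * (1 - \<nu>) powr (1 - \<theta>))"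
      using den denpos PM M by (intro divide_left_mono) auto
    finally show ?thesis using Y rhs lhsY by linarith
  qed
qed

lemma sq_expand:
  fixes e d :: "'a::real_inner"
  shows "inner (e + a *\<^sub>R d) (e + a *\<^sub>R d) = inner e e + 2 * a * inner e d + a^2 * inner d d"
  by (simp add: inner_add_left inner_add_right inner_commute[of d e] power2_eq_square algebra_simps)

lemma phi_expand:
  fixes g u p v :: "'a::real_inner"
  shows "acgm_phi g u \<beta> ((1 - a) *\<^sub>R p + a *\<^sub>R v) = acgm_phi g u \<beta> p
     - a * inner (acgm_grad g u \<beta> p) (p - v) + a^2 * \<beta> / 2 * (norm (v - p))^2"
proof -
  have e: "(1 - a) *\<^sub>R p + a *\<^sub>R v = p + a *\<^sub>R (v - p)" by (simp add: algebra_simps)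
  have n: "(norm (p + a *\<^sub>R (v - p) - u))^2 = (norm (p - u))^2 + 2 * a * inner (p - u) (v - p) + a^2 * (norm (v - p))^2"
  proof -
    have "p + a *\<^sub>R (v - p) - u = (p - u) + a *\<^sub>R (v - p)" by (simp add: algebra_simps)
    hence "(norm (p + a *\<^sub>R (v - p) - u))^2 = inner ((p - u) + a *\<^sub>R (v - p)) ((p - u) + a *\<^sub>R (v - p))"
      by (simp only: power2_norm_eq_inner)
    also have "\<dots> = (norm (p - u))^2 + 2 * a * inner (p - u) (v - p) + a^2 * (norm (v - p))^2"
      by (simp only: sq_expand power2_norm_eq_inner)
    finally show ?thesis .
  qed
  have i1: "inner g (p + a *\<^sub>R (v - p)) = inner g p + a * inner g (v - p)"
    by (simp add: inner_add_right)
  have i2: "inner (acgm_grad g u \<beta> p) (p - v) = - inner g (v - p) - \<beta> * inner (p - u) (v - p)"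
    unfolding acgm_grad_def
    by (simp add: inner_add_left inner_diff_right inner_diff_left algebra_simps)
  show ?thesis unfolding e acgm_phi_def n i1 i2 by (simp add: algebra_simps)
qed

lemma phi_lower:
  fixes g u p x :: "'a::real_inner"
  assumes "\<beta> \<ge> 0"
  shows "acgm_phi g u \<beta> p + inner (acgm_grad g u \<beta> p) (x - p) \<le> acgm_phi g u \<beta> x"
proof -
  have "acgm_phi g u \<beta> x = acgm_phi g u \<beta> ((1 - 1) *\<^sub>R p + 1 *\<^sub>R x)" by simp
  also have "\<dots> = acgm_phi g u \<beta> p - inner (acgm_grad g u \<beta> p) (p - x) + \<beta> / 2 * (norm (x - p))^2"
    using phi_expand[of g u \<beta> 1 p x] by simp
  finally have "acgm_phi g u \<beta> x = acgm_phi g u \<beta> p - inner (acgm_grad g u \<beta> p) (p - x) + \<beta> / 2 * (norm (x - p))^2" .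
  moreover have "- inner (acgm_grad g u \<beta> p) (p - x) = inner (acgm_grad g u \<beta> p) (x - p)"
    by (simp add: inner_diff_right)
  ultimately show ?thesis using assms by simp
qed

lemma acgm_us_in:
  assumes X: "convex X" and u: "u \<in> X" and st: "acgm_steps X \<sigma> D g u \<beta> \<eta> us vs t"
  shows "j = 0 \<or> j < t \<Longrightarrow> us j \<in> X"
proof (induction j)
  case 0 thus ?case using st u by (simp add: acgm_steps_def)
next
  case (Suc j)
  hence j: "Suc j < t" by simp
  hence "Suc j \<in> {1..<t}" by simp
  then obtain \<alpha> where a: "\<alpha> \<in> {0..1}" "us (Suc j) = (1 - \<alpha>) *\<^sub>R us j + \<alpha> *\<^sub>R vs (Suc j)"
    using st unfolding acgm_steps_def by fastforce
  have "vs (Suc j) \<in> X" using st j unfolding acgm_steps_def by auto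
  moreover have "us j \<in> X" using Suc j by simp
  ultimately show ?case using a convexD_alt[OF X] by auto
qed

lemma acgm_run_props:
  assumes X: "convex X" and u: "u \<in> X" and r: "acgm_run X \<sigma> D g u \<beta> \<eta> T out"
  shows "out \<in> X" "\<forall>w\<in>X. inner (acgm_grad g u \<beta> out) (out - w) \<le> \<eta>"
proof -
  obtain us vs where st: "acgm_steps X \<sigma> D g u \<beta> \<eta> us vs T"
    and t: "inner (acgm_grad g u \<beta> (us (T-1))) (us (T-1) - vs T) \<le> \<eta> - acgm_delta \<sigma> \<beta> D T"
    and o: "out = us (T - 1)" and T: "1 \<le> T"
    using r unfolding acgm_run_def by blast
  show "out \<in> X" using acgm_us_in[OF X u st, of "T - 1"] T o by simp
  show "\<forall>w\<in>X. inner (acgm_grad g u \<beta> out) (out - w) \<le> \<eta>"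
  proof
    fix w assume w: "w \<in> X"
    have "inner (acgm_grad g u \<beta> (us (T-1))) (vs T - w) \<le> acgm_delta \<sigma> \<beta> D T"
      using st T w unfolding acgm_steps_def by auto
    moreover have "inner (acgm_grad g u \<beta> out) (out - w) = inner (acgm_grad g u \<beta> (us (T-1))) (us (T-1) - vs T)
       + inner (acgm_grad g u \<beta> (us (T-1))) (vs T - w)"
      unfolding o by (simp add: inner_diff_right)
    ultimately show "inner (acgm_grad g u \<beta> out) (out - w) \<le> \<eta>" using t by linarith
  qed
qed

lemma hstep_alg0:
  fixes J s Q \<sigma> :: real
  assumes "J \<ge> 1" "Q \<ge> 0" "\<sigma> \<ge> 0" "s = J + 1"
  shows "(1 - 2 / s) * (2 * (1 + \<sigma>) * Q / J) + 2 / s * (\<sigma> * Q / J)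
          + (2 / s)^2 * Q / 2 \<le> 2 * (1 + \<sigma>) * Q / s"
proof -
  have J: "J > 0" "s > 0" using assms by auto
  have "(1 - 2 / s) * (2 * (1 + \<sigma>) * Q / J) + 2 / s * (\<sigma> * Q / J) + (2 / s)^2 * Q / 2
     = (2 * (1 + \<sigma>) * Q * (s - 2) * s + 2 * \<sigma> * Q * s + 2 * Q * J) / (J * s^2)"
    using J by (simp add: field_simps power2_eq_square)
  also have "\<dots> \<le> (2 * (1 + \<sigma>) * Q * J * s) / (J * s^2)"
    using J assms by (intro divide_right_mono) (auto simp: algebra_simps)
  also have "\<dots> = 2 * (1 + \<sigma>) * Q / s" using J by (simp add: field_simps power2_eq_square)
  finally show ?thesis .
qed

lemma acgm_count:
  fixes X :: "'a::euclidean_space set"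
  assumes X: "compact X" "convex X" and Dd: "D = diameter X" "D > 0" and u: "u \<in> X"
    and \<beta>: "\<beta> > 0" and \<sigma>: "\<sigma> \<ge> 0" and K: "K \<ge> 1"
    and st: "acgm_steps X \<sigma> D g u \<beta> (\<beta> * D^2 / real K) us vs t"
  shows "real t \<le> (7 * \<sigma> + 6) * real K + 1"
proof -
  define \<phi> where "\<phi> = acgm_phi g u \<beta>"
  define gr where "gr = acgm_grad g u \<beta>"
  define Q where "Q = \<beta> * D^2"
  have Q: "Q > 0" using \<beta> Dd by (simp add: Q_def)
  have del: "acgm_delta \<sigma> \<beta> D j = \<sigma> * Q / real j" for j
    by (simp add: acgm_delta_def Q_def)
  have bX: "bounded X" using X compact_imp_bounded by blast
  have "continuous_on X \<phi>" unfolding \<phi>_def acgm_phi_def by (intro continuous_intros)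
  then obtain xs where xs: "xs \<in> X" "\<forall>y\<in>X. \<phi> xs \<le> \<phi> y"
    using continuous_attains_inf[OF X(1)] u by blast
  define w where "w j = inner (gr (us (j - 1))) (us (j - 1) - vs j)" for j
  have usX: "j = 0 \<or> j < t \<Longrightarrow> us j \<in> X" for j using acgm_us_in[OF X(2) u st] by blast
  have vsX: "j \<in> {1..t} \<Longrightarrow> vs j \<in> X" for j using st unfolding acgm_steps_def by blast
  have lmo: "j \<in> {1..t} \<Longrightarrow> x \<in> X \<Longrightarrow> inner (gr (us (j - 1))) (vs j - x) \<le> \<sigma> * Q / real j" for j x
    using st unfolding acgm_steps_def gr_def del by blast
  have fail: "j \<in> {1..<t} \<Longrightarrow> w j > Q / real K - \<sigma> * Q / real j" for j
    using st unfolding acgm_steps_def w_def gr_def del Q_def by auto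
  have F3: "\<phi> (us j) \<le> \<phi> (us (j - 1)) - a * w j + a^2 * Q / 2"
    if j: "j \<in> {1..<t}" and a: "a \<in> {0..1}" for j a
  proof -
    obtain \<alpha> where al: "\<forall>a\<in>{0..1}. \<phi> ((1-\<alpha>) *\<^sub>R us (j-1) + \<alpha> *\<^sub>R vs j)
                         \<le> \<phi> ((1-a) *\<^sub>R us (j-1) + a *\<^sub>R vs j)"
      and ue: "us j = (1-\<alpha>) *\<^sub>R us (j-1) + \<alpha> *\<^sub>R vs j"
      using st j unfolding acgm_steps_def \<phi>_def by blast
    have "\<phi> (us j) \<le> \<phi> ((1-a) *\<^sub>R us (j-1) + a *\<^sub>R vs j)" using al a ue by simp
    also have "\<dots> = \<phi> (us (j-1)) - a * w j + a^2 * \<beta> / 2 * (norm (vs j - us (j-1)))^2"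
      unfolding \<phi>_def w_def gr_def by (rule phi_expand)
    also have "a^2 * \<beta> / 2 * (norm (vs j - us (j-1)))^2 \<le> a^2 * \<beta> / 2 * D^2"
    proof -
      have v: "vs j \<in> X" using vsX[of j] j by auto
      have "j - 1 < t" using j by auto
      hence uu: "us (j-1) \<in> X" using usX[of "j-1"] by blast
      have "norm (vs j - us (j-1)) \<le> D"
        using diameter_bounded_bound[OF bX v uu] Dd by (simp add: dist_norm)
      hence "(norm (vs j - us (j-1)))^2 \<le> D^2" by (intro power_mono) auto
      thus ?thesis using \<beta> by (intro mult_left_mono) auto
    qed
    finally show ?thesis by (simp add: Q_def)
  qed
  have F4: "\<phi> (us (j - 1)) - \<phi> xs \<le> w j + \<sigma> * Q / real j" if j: "j \<in> {1..t}" for j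
  proof -
    have "\<phi> (us (j-1)) + inner (gr (us (j-1))) (xs - us (j-1)) \<le> \<phi> xs"
      unfolding \<phi>_def gr_def by (rule phi_lower) (use \<beta> in simp)
    moreover have "inner (gr (us (j-1))) (xs - us (j-1)) = - w j - inner (gr (us (j - 1))) (vs j - xs)"
      unfolding w_def by (simp add: inner_diff_right)
    moreover have "inner (gr (us (j - 1))) (vs j - xs) \<le> \<sigma> * Q / real j" using lmo[OF j xs(1)] .
    ultimately show ?thesis by linarith
  qed
  have F5: "1 \<le> j \<Longrightarrow> j < t \<Longrightarrow> \<phi> (us j) - \<phi> xs \<le> 2 * (1 + \<sigma>) * Q / (real j + 1)" for j
  proof (induction j)
    case 0 thus ?case by simp
  next
    case (Suc i)
    show ?case
    proof (cases "i = 0")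
      case True
      have "\<phi> (us 1) \<le> \<phi> (us 0) - 1 * w 1 + 1^2 * Q / 2" using F3[of 1 1] Suc True by simp
      moreover have "\<phi> (us 0) - \<phi> xs \<le> w 1 + \<sigma> * Q / real 1" using F4[of 1] Suc True by simp
      ultimately show ?thesis using True Q by (simp add: algebra_simps)
    next
      case False
      define J where "J = real (Suc i)"
      have J: "J \<ge> 1" "real i + 1 = J" by (auto simp: J_def)
      define a where "a = 2 / (J + 1)"
      have a: "a \<in> {0..1}" "1 - a \<ge> 0" using J by (auto simp: a_def)
      have IH: "\<phi> (us i) - \<phi> xs \<le> 2 * (1 + \<sigma>) * Q / J" using Suc False J by simp
      have s3: "\<phi> (us (Suc i)) \<le> \<phi> (us i) - a * w (Suc i) + a^2 * Q / 2"
        using F3[of "Suc i" a] Suc a by simp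
      have s4: "\<phi> (us i) - \<phi> xs \<le> w (Suc i) + \<sigma> * Q / J" using F4[of "Suc i"] Suc J_def by simp
      have "\<phi> (us (Suc i)) - \<phi> xs \<le> (1 - a) * (\<phi> (us i) - \<phi> xs) + a * (\<sigma> * Q / J) + a^2 * Q / 2"
      proof -
        have "a * (\<phi> (us i) - \<phi> xs) \<le> a * (w (Suc i) + \<sigma> * Q / J)"
          using s4 a by (intro mult_left_mono) auto
        thus ?thesis using s3 by (simp add: algebra_simps)
      qed
      also have "\<dots> \<le> (1 - a) * (2 * (1 + \<sigma>) * Q / J) + a * (\<sigma> * Q / J) + a^2 * Q / 2"
        using IH a by (intro add_mono mult_left_mono) auto
      also have "\<dots> \<le> 2 * (1 + \<sigma>) * Q / (J + 1)"
        unfolding a_def using hstep_alg0[of J Q \<sigma> "J + 1"] J Q \<sigma> by simp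
      finally show ?thesis by (simp add: J_def)
    qed
  qed
  define c where "c = 2 * \<sigma> + 2"
  define j0 where "j0 = nat \<lfloor>c * real K\<rfloor>"
  have Kr: "real K \<ge> 1" using K by simp
  have c2: "c \<ge> 2" using \<sigma> by (simp add: c_def)
  have cc: "c \<le> c * real K" using Kr c2 by (simp add: mult_le_cancel_left1)
  have cK: "c * real K \<ge> 2" using cc c2 by linarith
  have j0: "real j0 \<le> c * real K" "c * real K < real j0 + 1"
    using cK unfolding j0_def by (auto simp: of_nat_nat)
  have j0ge: "j0 \<ge> 1" using j0 cK by linarith
  show ?thesis
  proof (cases "t \<le> j0 + 1")
    case True
    hence "real t \<le> c * real K + 1" using j0 by linarith
    also have "\<dots> \<le> (7 * \<sigma> + 6) * real K + 1" unfolding c_def using \<sigma> Kr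
      by (intro add_right_mono mult_right_mono) auto
    finally show ?thesis .
  next
    case False
    define m where "m = t - 1 - j0"
    have m: "m \<ge> 1" "t = m + j0 + 1" using False by (auto simp: m_def)
    define b where "b = (\<sigma> + 2) / (c * real K)"
    have cpos: "c * real K > 0" using cK by linarith
    have "\<sigma> + 2 \<le> c * real K" using cc \<sigma> unfolding c_def by linarith
    hence b: "b > 0" "b \<le> 1" using cpos \<sigma> unfolding b_def
      by (auto simp: divide_le_eq)
    have bQ: "Q * b \<le> Q / real K - \<sigma> * Q / real j" if "j \<ge> j0 + 1" for j
    proof -
      have "real j > c * real K" using that j0 by linarith
      hence "\<sigma> * Q / real j \<le> \<sigma> * Q / (c * real K)"
        using cpos Q \<sigma> by (intro divide_left_mono) auto
      moreover have "Q * b = Q / real K - \<sigma> * Q / (c * real K)"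
      proof -
        have "Q / real K - \<sigma> * Q / (c * real K) = Q * (c - \<sigma>) / (c * real K)"
          using Kr c2 by (simp add: field_simps)
        moreover have "c - \<sigma> = \<sigma> + 2" by (simp add: c_def)
        ultimately show ?thesis by (simp add: b_def)
      qed
      ultimately show ?thesis by linarith
    qed
    have F6: "j0 + n \<le> t - 1 \<Longrightarrow> \<phi> (us (j0 + n)) \<le> \<phi> (us j0) - real n * (b^2 * Q / 2)" for n
    proof (induction n)
      case 0 thus ?case by simp
    next
      case (Suc n)
      let ?j = "Suc (j0 + n)"
      have jin: "?j \<in> {1..<t}" using Suc.prems m by auto
      have "\<phi> (us ?j) \<le> \<phi> (us (j0 + n)) - b * w ?j + b^2 * Q / 2"
        using F3[OF jin, of b] b by simp
      moreover have "b * (Q * b) \<le> b * w ?j"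
        using bQ[of ?j] fail[OF jin] b by (intro mult_left_mono) auto
      ultimately have "\<phi> (us ?j) \<le> \<phi> (us (j0 + n)) - b^2 * Q / 2"
        by (simp add: power2_eq_square algebra_simps)
      moreover have "\<phi> (us (j0 + n)) \<le> \<phi> (us j0) - real n * (b^2 * Q / 2)" using Suc by simp
      moreover have "real (Suc n) * (b^2 * Q / 2) = real n * (b^2 * Q / 2) + b^2 * Q / 2"
        by (simp add: algebra_simps)
      ultimately show ?case by (simp only: Suc_eq_plus1 add.assoc)
    qed
    have "\<phi> (us (t - 1)) \<le> \<phi> (us j0) - real m * (b^2 * Q / 2)"
      using F6[of m] m by (simp add: add.commute)
    moreover have "\<phi> xs \<le> \<phi> (us (t - 1))" using xs usX[of "t - 1"] m by auto
    moreover have "\<phi> (us j0) - \<phi> xs \<le> 2 * (1 + \<sigma>) * Q / (real j0 + 1)"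
      using F5[of j0] j0ge m by simp
    moreover have "2 * (1 + \<sigma>) * Q / (real j0 + 1) \<le> 2 * (1 + \<sigma>) * Q / (c * real K)"
      using j0 cpos Q \<sigma> by (intro divide_left_mono) auto
    ultimately have mb: "real m * (b^2 * Q / 2) \<le> 2 * (1 + \<sigma>) * Q / (c * real K)" by linarith
    have "real m * (\<sigma> + 2)^2 \<le> 8 * (1 + \<sigma>)^2 * real K"
    proof -
      have "real m * (b^2 * Q / 2) * (2 * c^2 * real K^2 / Q) = real m * (\<sigma> + 2)^2"
        unfolding b_def using Q c2 Kr by (simp add: field_simps power2_eq_square)
      moreover have "2 * (1 + \<sigma>) * Q / (c * real K) * (2 * c^2 * real K^2 / Q) = 8 * (1 + \<sigma>)^2 * real K"
        using Q c2 Kr by (simp add: field_simps power2_eq_square) (simp add: c_def algebra_simps power2_eq_square)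
      moreover have "2 * c^2 * real K^2 / Q \<ge> 0" using Q by simp
      ultimately show ?thesis using mult_right_mono[OF mb] by metis
    qed
    moreover have "8 * (1 + \<sigma>)^2 \<le> (5 * \<sigma> + 4) * (\<sigma> + 2)^2"
      using \<sigma> by (simp add: power2_eq_square algebra_simps)
    ultimately have "real m * (\<sigma> + 2)^2 \<le> (5 * \<sigma> + 4) * real K * (\<sigma> + 2)^2"
      using Kr by (smt (verit) mult_right_mono mult.commute mult.assoc of_nat_0_le_iff)
    hence "real m \<le> (5 * \<sigma> + 4) * real K" using \<sigma> by simp
    thus ?thesis using m j0 unfolding c_def by (simp add: algebra_simps)
  qed
qed

lemma sum_nat_ge: "(\<Sum>k=1..K. real k) \<ge> real K ^ 2 / 2"
proof (induction K)
  case 0 thus ?case by simp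
next
  case (Suc K)
  have "(\<Sum>k=1..Suc K. real k) = (\<Sum>k=1..K. real k) + real (Suc K)" by simp
  also have "\<dots> \<ge> real K ^ 2 / 2 + real (Suc K)" using Suc by simp
  finally show ?case by (simp add: power2_eq_square algebra_simps)
qed

lemma sqrt_step:
  fixes g :: real assumes "0 \<le> g" "g \<le> 1"
  shows "sqrt (1 - g) \<le> 1 - g / 2"
  using assms by (intro real_le_lsqrt) (auto simp: power2_eq_square algebra_simps)

lemma count_main:
  fixes L \<gamma> \<Gamma> :: "nat \<Rightarrow> real" and C E p q :: real and K :: nat
  assumes K: "K \<ge> 1" and C: "C > 0" and E: "E > 0" and p: "0 \<le> p" "p \<le> 1" and q: "q = 1 / (2 - p)"
    and hk: "\<forall>k\<in>{1..K}. L k > 0 \<and> 0 < \<gamma> k \<and> \<gamma> k \<le> 1 \<and> L k * (\<gamma> k)^2 = real k * \<Gamma> k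
               \<and> \<Gamma> k > 0 \<and> L k < C * \<gamma> k powr (- p)"
    and g1: "\<gamma> 1 = 1"
    and rec: "\<forall>k\<in>{2..K}. \<Gamma> k = (1 - \<gamma> k) * \<Gamma> (k - 1)"
    and big: "real K * \<Gamma> K > E"
  shows "real K < 4 * (C / E) powr q"
proof -
  have tp: "1 \<le> 2 - p" "2 - p \<le> 2" using p by auto
  have q1: "q \<le> 1" "q \<ge> 1/2" "(2 - p) * q = 1"
  proof -
    show "q \<le> 1" unfolding q using tp by simp
    show "q \<ge> 1/2" unfolding q using tp by (simp add: field_simps)
    show "(2 - p) * q = 1" unfolding q using tp by simp
  qed
  have Kr: "real K > 0" using K by simp
  have mono: "k \<ge> 1 \<Longrightarrow> k + i \<le> K \<Longrightarrow> \<Gamma> (k + i) \<le> \<Gamma> k" for k i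
  proof (induction i)
    case 0 thus ?case by simp
  next
    case (Suc i)
    have "\<Gamma> (k + Suc i) = (1 - \<gamma> (k + Suc i)) * \<Gamma> (k + i)" using rec Suc.prems by auto
    also have "\<dots> \<le> \<Gamma> (k + i)"
    proof -
      have a: "k + i \<in> {1..K}" "k + Suc i \<in> {1..K}" using Suc.prems by auto
      show ?thesis using hk a by (intro mult_left_le_one_le) (auto simp del: atLeastAtMost_iff)
    qed
    finally show ?case using Suc by simp
  qed
  have GK: "\<Gamma> K \<le> \<Gamma> k" if "k \<in> {1..K}" for k using mono[of k "K - k"] that by auto
  have EK: "\<Gamma> K > E / real K" using big Kr by (simp add: field_simps)
  define Z where "Z = E / real K"
  have Z: "Z > 0" using E Kr by (simp add: Z_def)
  have SB: "j \<ge> 1 \<Longrightarrow> j \<le> K \<Longrightarrow> 1 / sqrt (\<Gamma> j) \<ge> (\<Sum>k=1..j. \<gamma> k / (2 * sqrt (\<Gamma> k)))" for j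
  proof (induction j)
    case 0 thus ?case by simp
  next
    case (Suc j)
    show ?case
    proof (cases "j = 0")
      case True
      have "\<Gamma> 1 > 0" using hk K by auto
      thus ?thesis using True g1 by (simp add: field_simps)
    next
      case False
      let ?g = "\<gamma> (Suc j)"
      have hj: "\<Gamma> j > 0" "\<Gamma> (Suc j) > 0" "0 < ?g" "?g \<le> 1" using hk Suc.prems False by auto
      have r: "\<Gamma> (Suc j) = (1 - ?g) * \<Gamma> j" using rec Suc.prems False by auto
      have g1': "?g < 1" using hj r by (cases "?g = 1") auto
      have sq: "sqrt (\<Gamma> (Suc j)) = sqrt (1 - ?g) * sqrt (\<Gamma> j)" using r by (simp add: real_sqrt_mult)
      have inv: "1 / sqrt (\<Gamma> j) = sqrt (1 - ?g) / sqrt (\<Gamma> (Suc j))" using sq hj g1' by simp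
      have "1 / sqrt (\<Gamma> (Suc j)) - 1 / sqrt (\<Gamma> j) = (1 - sqrt (1 - ?g)) / sqrt (\<Gamma> (Suc j))"
        unfolding inv by (simp add: diff_divide_distrib)
      also have "\<dots> \<ge> (?g / 2) / sqrt (\<Gamma> (Suc j))"
        using sqrt_step[of ?g] hj by (intro divide_right_mono) auto
      finally have "1 / sqrt (\<Gamma> (Suc j)) \<ge> 1 / sqrt (\<Gamma> j) + ?g / (2 * sqrt (\<Gamma> (Suc j)))" by simp
      moreover have "1 / sqrt (\<Gamma> j) \<ge> (\<Sum>k=1..j. \<gamma> k / (2 * sqrt (\<Gamma> k)))" using Suc False by simp
      ultimately show ?thesis by simp
    qed
  qed
  have PK: "\<gamma> k / sqrt (\<Gamma> k) \<ge> (real k / C) powr q * Z powr (q - 1/2)" if k: "k \<in> {1..K}" for k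
  proof -
    have hk': "L k > 0" "0 < \<gamma> k" "\<gamma> k \<le> 1" "L k * (\<gamma> k)^2 = real k * \<Gamma> k" "\<Gamma> k > 0"
      "L k < C * \<gamma> k powr (- p)" using hk k by auto
    have "real k * \<Gamma> k < C * (\<gamma> k powr (- p) * (\<gamma> k)^2)"
      using hk' by (metis mult.assoc mult_strict_right_mono zero_less_power)
    also have "\<gamma> k powr (- p) * (\<gamma> k)^2 = \<gamma> k powr (2 - p)"
    proof -
      have "(\<gamma> k)^2 = \<gamma> k powr 2" using hk' by (simp add: powr_realpow)
      thus ?thesis by (simp add: powr_add[symmetric])
    qed
    finally have "real k * \<Gamma> k / C < \<gamma> k powr (2 - p)" using C by (simp add: field_simps)
    hence "(real k * \<Gamma> k / C) powr q < (\<gamma> k powr (2 - p)) powr q"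
      using q1 k hk' C by (intro powr_less_mono2) auto
    also have "\<dots> = \<gamma> k" using q1 hk' by (simp add: powr_powr)
    finally have A: "(real k / C) powr q * \<Gamma> k powr q < \<gamma> k"
      by (simp add: powr_mult powr_divide)
    have B: "\<Gamma> k powr q / sqrt (\<Gamma> k) = \<Gamma> k powr (q - 1/2)"
      using hk' by (simp add: powr_diff powr_half_sqrt[symmetric])
    have "(real k / C) powr q * Z powr (q - 1/2) \<le> (real k / C) powr q * \<Gamma> k powr (q - 1/2)"
      using GK[OF k] EK Z q1 unfolding Z_def by (intro mult_left_mono powr_mono2) auto
    also have "\<dots> = (real k / C) powr q * \<Gamma> k powr q / sqrt (\<Gamma> k)" unfolding B[symmetric] by simp
    also have "\<dots> \<le> \<gamma> k / sqrt (\<Gamma> k)" using A hk' by (intro divide_right_mono) auto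
    finally show ?thesis .
  qed
  have PS: "(\<Sum>k=1..K. (real k / C) powr q) \<ge> real K powr (q + 1) / (2 * C powr q)"
  proof -
    have "(real k / C) powr q \<ge> real k * real K powr (q - 1) / C powr q" if k: "k \<in> {1..K}" for k
    proof -
      have kp: "real k > 0" "real k \<le> real K" using k by auto
      have "real k powr q = real k * real k powr (q - 1)"
        using kp by (simp add: powr_diff)
      also have "\<dots> \<ge> real k * real K powr (q - 1)"
        using kp q1 by (intro mult_left_mono powr_mono2') auto
      finally show ?thesis by (simp add: powr_divide divide_right_mono)
    qed
    hence S1: "(\<Sum>k=1..K. real k * real K powr (q - 1) / C powr q) \<le> (\<Sum>k=1..K. (real k / C) powr q)"
      by (intro sum_mono) auto
    have S2: "(\<Sum>k=1..K. real k * real K powr (q - 1) / C powr q) = (\<Sum>k=1..K. real k) * (real K powr (q - 1) / C powr q)"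
      by (simp add: sum_distrib_right sum_divide_distrib mult.assoc)
    have S3: "real K ^ 2 / 2 * (real K powr (q - 1) / C powr q) \<le> (\<Sum>k=1..K. real k) * (real K powr (q - 1) / C powr q)"
      using sum_nat_ge[of K] by (intro mult_right_mono) auto
    have S4: "real K ^ 2 / 2 * (real K powr (q - 1) / C powr q) = real K powr (q + 1) / (2 * C powr q)"
    proof -
      have "real K ^ 2 = real K powr 2" using Kr by (simp add: powr_realpow)
      moreover have "real K powr (q + 1) = real K powr 2 * real K powr (q - 1)"
        by (simp only: powr_add[symmetric]) (simp add: add.commute)
      ultimately have "real K ^ 2 * real K powr (q - 1) = real K powr (q + 1)" by simp
      thus ?thesis by simp
    qed
    show ?thesis using S1 S2 S3 S4 by linarith
  qed
  have T1: "(\<Sum>k=1..K. \<gamma> k / (2 * sqrt (\<Gamma> k))) \<le> 1 / sqrt (\<Gamma> K)" using SB[of K] K by simp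
  have T2: "(\<Sum>k=1..K. (real k / C) powr q * Z powr (q - 1/2) / 2) \<le> (\<Sum>k=1..K. \<gamma> k / (2 * sqrt (\<Gamma> k)))"
    using PK by (intro sum_mono) (auto simp: divide_right_mono)
  have T3: "(\<Sum>k=1..K. (real k / C) powr q * Z powr (q - 1/2) / 2) = (\<Sum>k=1..K. (real k / C) powr q) * (Z powr (q - 1/2) / 2)"
    by (simp add: sum_distrib_right sum_divide_distrib)
  have T4: "real K powr (q + 1) / (2 * C powr q) * (Z powr (q - 1/2) / 2) \<le> (\<Sum>k=1..K. (real k / C) powr q) * (Z powr (q - 1/2) / 2)"
    using PS by (intro mult_right_mono) auto
  have L1: "real K powr (q + 1) / (2 * C powr q) * (Z powr (q - 1/2) / 2) \<le> 1 / sqrt (\<Gamma> K)"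
    using T1 T2 T3 T4 by linarith
  have L2: "1 / sqrt (\<Gamma> K) < 1 / sqrt Z"
    using EK Z unfolding Z_def by (intro divide_strict_left_mono real_sqrt_less_mono) auto
  have "real K powr (q + 1) / (2 * C powr q) * (Z powr (q - 1/2) / 2) * sqrt Z < 1"
  proof -
    have "real K powr (q + 1) / (2 * C powr q) * (Z powr (q - 1/2) / 2) < 1 / sqrt Z" using L1 L2 by linarith
    hence "real K powr (q + 1) / (2 * C powr q) * (Z powr (q - 1/2) / 2) * sqrt Z < 1 / sqrt Z * sqrt Z"
      using Z by (intro mult_strict_right_mono) auto
    thus ?thesis using Z by simp
  qed
  moreover have "real K powr (q + 1) / (2 * C powr q) * (Z powr (q - 1/2) / 2) * sqrt Z
     = real K * E powr q / (4 * C powr q)"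
  proof -
    have "Z powr (q - 1/2) * sqrt Z = Z powr q"
      using Z by (simp add: powr_half_sqrt[symmetric] powr_add[symmetric])
    moreover have "Z powr q = E powr q / real K powr q" by (simp add: Z_def powr_divide)
    moreover have "real K powr (q + 1) = real K powr q * real K" using Kr by (simp add: powr_add)
    ultimately show ?thesis using Kr by (simp add: field_simps)
  qed
  ultimately have "real K * E powr q < 4 * C powr q" using C by (simp add: field_simps)
  thus ?thesis using E by (simp add: powr_divide field_simps)
qed

lemma step_ineq:
  fixes f :: "'a::real_inner \<Rightarrow> real"
  assumes X: "convex X" and fc: "convex_on X f"
    and fg: "\<forall>x\<in>X. (f has_derivative (\<lambda>h. inner (G x) h)) (at x)"
    and xp: "xp \<in> X" and yp: "yp \<in> X" and w: "w \<in> X"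
    and g: "0 < \<gamma>" "\<gamma> \<le> 1"
    and zd: "z = (1 - \<gamma>) *\<^sub>R yp + \<gamma> *\<^sub>R xp" and yd: "yk = (1 - \<gamma>) *\<^sub>R yp + \<gamma> *\<^sub>R xk"
    and out: "inner (acgm_grad (G z) xp (Lt * \<gamma>) xk) (xk - w) \<le> \<eta>"
    and acc: "ucgs_accept f G \<epsilon> Lt \<gamma> z yk"
  shows "f yk \<le> (1 - \<gamma>) * f yp + \<gamma> * (f z + inner (G z) (w - z))
          + Lt * \<gamma>^2 / 2 * ((norm (w - xp))^2 - (norm (w - xk))^2) + \<gamma> * \<eta> + \<epsilon> / 2 * \<gamma>"
proof -
  have zX: "z \<in> X" using convexD_alt[OF X yp xp, of \<gamma>] g zd by simp
  define A where "A = xk - xp"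
  define B where "B = w - xp"
  define Cv where "Cv = yp - xp"
  define gA where "gA = inner (G z) A"
  define gB where "gB = inner (G z) B"
  define gC where "gC = inner (G z) Cv"
  define AA where "AA = inner A A"
  define BB where "BB = inner B B"
  define AB where "AB = inner A B"
  have e1: "yk - z = \<gamma> *\<^sub>R A" unfolding yd zd A_def by (simp add: algebra_simps)
  have e2: "yp - z = \<gamma> *\<^sub>R Cv" unfolding zd Cv_def by (simp add: algebra_simps)
  have e3: "w - z = B - (1 - \<gamma>) *\<^sub>R Cv" unfolding zd B_def Cv_def by (simp add: algebra_simps)
  have e4: "xk - w = A - B" unfolding A_def B_def by simp
  have e5: "w - xk = B - A" unfolding A_def B_def by simp
  have i1: "inner (G z) (yk - z) = \<gamma> * gA" unfolding e1 gA_def by simp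
  have i2: "(norm (yk - z))^2 = \<gamma>^2 * AA" unfolding e1 AA_def
    by (simp only: power2_norm_eq_inner inner_scaleR_left inner_scaleR_right) (simp add: power2_eq_square)
  have i3: "inner (G z) (yp - z) = \<gamma> * gC" unfolding e2 gC_def by simp
  have i4: "inner (G z) (w - z) = gB - (1 - \<gamma>) * gC" unfolding e3 gB_def gC_def by (simp add: inner_diff_right)
  have i5: "inner (acgm_grad (G z) xp (Lt * \<gamma>) xk) (xk - w) = gA - gB + Lt * \<gamma> * (AA - AB)"
    unfolding acgm_grad_def e4 gA_def gB_def AA_def AB_def A_def[symmetric]
    by (simp add: inner_add_left inner_diff_right algebra_simps)
  have i6: "(norm (w - xp))^2 = BB" unfolding B_def[symmetric] BB_def by (simp add: power2_norm_eq_inner)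
  have i7: "(norm (w - xk))^2 = BB - 2 * AB + AA" unfolding e5 BB_def AB_def AA_def
    by (simp add: power2_norm_eq_inner inner_diff_left inner_diff_right inner_commute[of B A])
  have tan: "f z + \<gamma> * gC \<le> f yp" using tangent_le[OF X fc fg zX yp] i3 by simp
  have accs: "f yk \<le> f z + \<gamma> * gA + Lt / 2 * (\<gamma>^2 * AA) + \<epsilon> / 2 * \<gamma>"
    using acc unfolding ucgs_accept_def i1 i2 .
  have outs: "gA - gB + Lt * \<gamma> * (AA - AB) \<le> \<eta>" using out unfolding i5 .
  have t1: "(1 - \<gamma>) * (f z + \<gamma> * gC) \<le> (1 - \<gamma>) * f yp" using tan g by (intro mult_left_mono) auto
  have o1: "\<gamma> * (gA - gB + Lt * \<gamma> * (AA - AB)) \<le> \<gamma> * \<eta>" using outs g by (intro mult_left_mono) auto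
  have "(1 - \<gamma>) * f yp + \<gamma> * (f z + (gB - (1 - \<gamma>) * gC))
          + Lt * \<gamma>^2 / 2 * (BB - (BB - 2 * AB + AA)) + \<gamma> * \<eta> + \<epsilon> / 2 * \<gamma>
        - (f z + \<gamma> * gA + Lt / 2 * (\<gamma>^2 * AA) + \<epsilon> / 2 * \<gamma>)
      = ((1 - \<gamma>) * f yp - (1 - \<gamma>) * (f z + \<gamma> * gC)) + (\<gamma> * \<eta> - \<gamma> * (gA - gB + Lt * \<gamma> * (AA - AB)))"
    by (simp add: algebra_simps power2_eq_square add_divide_distrib diff_divide_distrib)
  hence "f yk \<le> (1 - \<gamma>) * f yp + \<gamma> * (f z + (gB - (1 - \<gamma>) * gC))
          + Lt * \<gamma>^2 / 2 * (BB - (BB - 2 * AB + AA)) + \<gamma> * \<eta> + \<epsilon> / 2 * \<gamma>"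
    using accs t1 o1 by linarith
  thus ?thesis unfolding i4 i6 i7 .
qed

lemma ell_rec:
  assumes k: "k \<ge> 2" and Gk: "ucgs_Gamma L \<gamma> k \<noteq> 0"
    and r: "ucgs_Gamma L \<gamma> k = (1 - \<gamma> k) * ucgs_Gamma L \<gamma> (k - 1)"
  shows "ucgs_ell f G L \<gamma> z k w = (1 - \<gamma> k) * ucgs_ell f G L \<gamma> z (k - 1) w
           + \<gamma> k * (f (z k) + inner (G (z k)) (w - z k))"
proof -
  define t where "t i = \<gamma> i / ucgs_Gamma L \<gamma> i * (f (z i) + inner (G (z i)) (w - z i))" for i
  have s: "(\<Sum>i=1..k. t i) = (\<Sum>i=1..k-1. t i) + t k"
  proof -
    have "k = Suc (k - 1)" using k by simp
    hence "{1..k} = insert k {1..k-1}" by auto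
    moreover have "k \<notin> {1..k-1}" by auto
    ultimately show ?thesis by (simp add: sum.insert add.commute)
  qed
  have "ucgs_ell f G L \<gamma> z k w = ucgs_Gamma L \<gamma> k * (\<Sum>i=1..k. t i)"
    unfolding ucgs_ell_def t_def by simp
  also have "\<dots> = ucgs_Gamma L \<gamma> k * (\<Sum>i=1..k-1. t i) + ucgs_Gamma L \<gamma> k * t k"
    unfolding s by (simp add: distrib_left)
  also have "ucgs_Gamma L \<gamma> k * t k = \<gamma> k * (f (z k) + inner (G (z k)) (w - z k))"
    using Gk unfolding t_def by simp
  also have "ucgs_Gamma L \<gamma> k * (\<Sum>i=1..k-1. t i) = (1 - \<gamma> k) * ucgs_ell f G L \<gamma> z (k - 1) w"
    unfolding r ucgs_ell_def t_def by simp
  finally show ?thesis .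
qed

lemma ell_one:
  assumes "ucgs_Gamma L \<gamma> 1 \<noteq> 0" "\<gamma> 1 = 1"
  shows "ucgs_ell f G L \<gamma> z 1 w = f (z 1) + inner (G (z 1)) (w - z 1)"
  using assms unfolding ucgs_ell_def by simp

lemma Lbound:
  fixes f :: "'a::real_inner \<Rightarrow> real"
  assumes X: "convex X"
    and fg: "\<forall>x\<in>X. (f has_derivative (\<lambda>h. inner (G x) h)) (at x)"
    and nu: "0 \<le> \<nu>" "\<nu> \<le> 1" and M: "M > 0"
    and holder: "\<forall>x\<in>X. \<forall>y\<in>X. norm (G x - G y) \<le> M * norm (x - y) powr \<nu>"
    and eps: "\<epsilon> > 0" and xp: "xp \<in> X" and yp: "yp \<in> X" and k1: "k \<ge> 1"
    and gok: "ucgs_gamma_ok k Gp Lk \<gamma>k" and Gp: "k \<noteq> 1 \<Longrightarrow> Gp \<ge> 0"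
    and tr: "ucgs_trial G X \<sigma> D k Gp xp yp (Lk / 2) \<gamma>' z' x' y' T'"
    and na: "\<not> ucgs_accept f G \<epsilon> (Lk / 2) \<gamma>' z' y'"
  shows "Lk < 2 * M powr (2 / (1 + \<nu>)) * \<epsilon> powr (- ((1 - \<nu>) / (1 + \<nu>))) * \<gamma>k powr (- ((1 - \<nu>) / (1 + \<nu>)))"
proof -
  define p where "p = (1 - \<nu>) / (1 + \<nu>)"
  have p: "p \<ge> 0" using nu by (simp add: p_def)
  have gok': "ucgs_gamma_ok k Gp (Lk / 2) \<gamma>'" and zd: "z' = (1 - \<gamma>') *\<^sub>R yp + \<gamma>' *\<^sub>R xp"
    and run: "acgm_run X \<sigma> D (G z') xp (Lk / 2 * \<gamma>') (Lk / 2 * \<gamma>' * D^2 / real k) T' x'"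
    and yd: "y' = (1 - \<gamma>') *\<^sub>R yp + \<gamma>' *\<^sub>R x'"
    using tr unfolding ucgs_trial_def by auto
  have g': "Lk / 2 > 0" "0 < \<gamma>'" "\<gamma>' \<le> 1" using gok' unfolding ucgs_gamma_ok_def by auto
  have gk: "Lk > 0" "0 < \<gamma>k" "\<gamma>k \<le> 1" using gok unfolding ucgs_gamma_ok_def by auto
  have x'X: "x' \<in> X" using acgm_run_props(1)[OF X xp run] .
  have z'X: "z' \<in> X" using convexD_alt[OF X yp xp, of \<gamma>'] g' zd by simp
  have y'X: "y' \<in> X" using convexD_alt[OF X yp x'X, of \<gamma>'] g' yd by simp
  define r where "r = norm (y' - z')"
  have desc: "f y' \<le> f z' + inner (G z') (y' - z') + M / (1 + \<nu>) * r powr (1 + \<nu>)"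
    unfolding r_def by (rule holder_descent[OF X fg nu(1) _ holder z'X y'X]) (use M in simp)
  have "f y' > f z' + inner (G z') (y' - z') + (Lk / 2) / 2 * r^2 + \<epsilon> / 2 * \<gamma>'"
    using na unfolding ucgs_accept_def r_def by simp
  hence lt: "M / (1 + \<nu>) * r powr (1 + \<nu>) > (Lk / 2) / 2 * r^2 + (\<epsilon> * \<gamma>') / 2" using desc by simp
  have L1: "Lk / 2 < M powr (2 / (1 + \<nu>)) * (\<epsilon> * \<gamma>') powr (- p)"
  proof (rule ccontr)
    assume "\<not> ?thesis"
    hence "Lk / 2 \<ge> M powr (2 / (1 + \<nu>)) * (\<epsilon> * \<gamma>') powr (- ((1 - \<nu>) / (1 + \<nu>)))"
      by (simp add: p_def)
    from young_holder[OF nu M _ _ this, of r] eps g' lt show False by (simp add: r_def)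
  qed
  have gg: "\<gamma>k \<le> \<gamma>'"
  proof (cases "k = 1")
    case True thus ?thesis using gok gok' unfolding ucgs_gamma_ok_def by simp
  next
    case False
    have e1: "Lk / 2 * \<gamma>'^2 / real k = Gp * (1 - \<gamma>')" and e2: "Lk * \<gamma>k^2 / real k = Gp * (1 - \<gamma>k)"
      using gok gok' False unfolding ucgs_gamma_ok_def by auto
    have k0: "real k > 0" using k1 by simp
    show ?thesis
    proof (rule ccontr)
      assume "\<not> ?thesis"
      hence lt: "\<gamma>' < \<gamma>k" by simp
      have "\<gamma>'^2 < \<gamma>k^2" using lt g' by (intro power_strict_mono) auto
      hence a: "Lk * \<gamma>'^2 < Lk * \<gamma>k^2" using gk by (intro mult_strict_left_mono) auto
      have "Lk / 2 * \<gamma>'^2 \<le> Lk * \<gamma>'^2" using gk by (intro mult_right_mono) auto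
      hence "Lk / 2 * \<gamma>'^2 < Lk * \<gamma>k^2" using a by linarith
      hence "Lk / 2 * \<gamma>'^2 / real k < Lk * \<gamma>k^2 / real k" using k0 by (intro divide_strict_right_mono)
      hence "Gp * (1 - \<gamma>') < Gp * (1 - \<gamma>k)" using e1 e2 by simp
      moreover have "Gp * (1 - \<gamma>k) \<le> Gp * (1 - \<gamma>')" using Gp[OF False] lt by (intro mult_left_mono) auto
      ultimately show False by simp
    qed
  qed
  have "(\<epsilon> * \<gamma>') powr (- p) \<le> (\<epsilon> * \<gamma>k) powr (- p)"
    using gg eps gk p by (intro powr_mono2') auto
  also have "\<dots> = \<epsilon> powr (- p) * \<gamma>k powr (- p)" by (simp add: powr_mult)
  finally have "M powr (2 / (1 + \<nu>)) * (\<epsilon> * \<gamma>') powr (- p) \<le> M powr (2 / (1 + \<nu>)) * (\<epsilon> powr (- p) * \<gamma>k powr (- p))"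
    by (intro mult_left_mono) auto
  with L1 show ?thesis by (simp add: p_def mult.assoc)
qed

lemma analysis:
  fixes X :: "'a::euclidean_space set" and f :: "'a \<Rightarrow> real" and G :: "'a \<Rightarrow> 'a"
    and \<nu> M \<sigma> \<epsilon> :: real and x0 :: 'a
  assumes X: "compact X" "convex X"
    and Xnontriv: "diameter X > 0"
    and fconv: "convex_on X f"
    and fgrad: "\<forall>x\<in>X. (f has_derivative (\<lambda>h. inner (G x) h)) (at x)"
    and nu: "0 \<le> \<nu>" "\<nu> \<le> 1" and M: "M > 0"
    and holder: "\<forall>x\<in>X. \<forall>y\<in>X. norm (G x - G y) \<le> M * norm (x - y) powr \<nu>"
    and sigma: "\<sigma> \<ge> 0" and eps: "\<epsilon> > 0" and x0: "x0 \<in> X"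
    and pre: "ucgs_prefix f G X \<sigma> (diameter X) \<epsilon> x0 L \<gamma> z x y s T K"
  shows "\<forall>k\<le>K. x k \<in> X \<and> y k \<in> X"
    and "\<forall>k\<in>{1..K}. L k > 0 \<and> 0 < \<gamma> k \<and> \<gamma> k \<le> 1 \<and> ucgs_Gamma L \<gamma> k > 0
            \<and> L k * (\<gamma> k)^2 = real k * ucgs_Gamma L \<gamma> k"
    and "\<forall>k\<in>{2..K}. ucgs_Gamma L \<gamma> k = (1 - \<gamma> k) * ucgs_Gamma L \<gamma> (k - 1)"
    and "K \<ge> 1 \<longrightarrow> \<gamma> 1 = 1"
    and "\<forall>k\<in>{1..K}. \<forall>w\<in>X. f (y k) + real k * ucgs_Gamma L \<gamma> k / 2 * (norm (w - x k))^2
            \<le> ucgs_ell f G L \<gamma> z k w + 3 / 2 * real k * ucgs_Gamma L \<gamma> k * (diameter X)^2 + \<epsilon> / 2"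
    and "\<forall>k\<in>{1..K}. \<forall>w\<in>X. ucgs_ell f G L \<gamma> z k w \<le> f w"
    and "\<forall>k\<in>{1..K}. L k < 2 * M powr (2 / (1 + \<nu>)) * \<epsilon> powr (- ((1 - \<nu>) / (1 + \<nu>)))
            * \<gamma> k powr (- ((1 - \<nu>) / (1 + \<nu>)))"
    and "\<forall>k\<in>{1..K}. real (T k) \<le> (7 * \<sigma> + 6) * real k + 1"
    and "\<forall>k\<in>{1..K}. s k \<in> X \<and> (\<forall>w\<in>X. ucgs_ell f G L \<gamma> z k (s k) \<le> ucgs_ell f G L \<gamma> z k w + ucgs_epsk \<sigma> (diameter X) L \<gamma> k)"
proof -
  define D where "D = diameter X"
  define \<Gamma> where "\<Gamma> = ucgs_Gamma L \<gamma>"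
  have bX: "bounded X" using X compact_imp_bounded by blast
  have Dpos: "D > 0" using Xnontriv by (simp add: D_def)
  have dist: "a \<in> X \<Longrightarrow> b \<in> X \<Longrightarrow> (norm (a - b))^2 \<le> D^2" for a b
    using diameter_bounded_bound[OF bX, of a b] by (intro power_mono) (auto simp: D_def dist_norm)
  have it: "ucgs_iter f G X \<sigma> D \<epsilon> L \<gamma> z x y s T k" if "k \<in> {1..K}" for k
    using pre that unfolding ucgs_prefix_def D_def by blast
  have x0y0: "x 0 = x0" "y 0 = x0" using pre unfolding ucgs_prefix_def by auto
  have gok: "ucgs_gamma_ok k (\<Gamma> (k - 1)) (L k) (\<gamma> k)"
    and zd: "z k = (1 - \<gamma> k) *\<^sub>R y (k - 1) + \<gamma> k *\<^sub>R x (k - 1)"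
    and run: "acgm_run X \<sigma> D (G (z k)) (x (k - 1)) (L k * \<gamma> k) (L k * \<gamma> k * D^2 / real k) (T k) (x k)"
    and yd: "y k = (1 - \<gamma> k) *\<^sub>R y (k - 1) + \<gamma> k *\<^sub>R x k"
    and acc: "ucgs_accept f G \<epsilon> (L k) (\<gamma> k) (z k) (y k)"
    and fl: "\<exists>\<gamma>' z' x' y' T'. ucgs_trial G X \<sigma> D k (\<Gamma> (k - 1)) (x (k - 1)) (y (k - 1))
          (L k / 2) \<gamma>' z' x' y' T' \<and> \<not> ucgs_accept f G \<epsilon> (L k / 2) \<gamma>' z' y'"
    and sk: "s k \<in> X \<and> (\<forall>w\<in>X. ucgs_ell f G L \<gamma> z k (s k) \<le> ucgs_ell f G L \<gamma> z k w + ucgs_epsk \<sigma> D L \<gamma> k)"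
    if "k \<in> {1..K}" for k
    using it[OF that] unfolding ucgs_iter_def ucgs_trial_def \<Gamma>_def by blast+
  have gpos: "L k > 0" "0 < \<gamma> k" "\<gamma> k \<le> 1" if "k \<in> {1..K}" for k
    using gok[OF that] unfolding ucgs_gamma_ok_def by auto
  have Gk: "\<Gamma> k > 0" "L k * (\<gamma> k)^2 = real k * \<Gamma> k" if "k \<in> {1..K}" for k
    using gpos[OF that] that by (auto simp: \<Gamma>_def ucgs_Gamma_def)
  have grec: "\<Gamma> k = (1 - \<gamma> k) * \<Gamma> (k - 1)" if "k \<in> {2..K}" for k
  proof -
    have "k \<in> {1..K}" "k \<noteq> 1" using that by auto
    hence "L k * (\<gamma> k)^2 / real k = \<Gamma> (k - 1) * (1 - \<gamma> k)"
      using gok unfolding ucgs_gamma_ok_def by auto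
    thus ?thesis by (simp add: \<Gamma>_def ucgs_Gamma_def mult.commute)
  qed
  have g1: "K \<ge> 1 \<longrightarrow> \<gamma> 1 = 1" using gok[of 1] unfolding ucgs_gamma_ok_def by auto
  have mem: "k \<le> K \<Longrightarrow> x k \<in> X \<and> y k \<in> X" for k
  proof (induction k)
    case 0 thus ?case using x0y0 x0 by simp
  next
    case (Suc k)
    have k: "Suc k \<in> {1..K}" using Suc by auto
    have p: "x k \<in> X" "y k \<in> X" using Suc by auto
    have xX: "x (Suc k) \<in> X" using acgm_run_props(1)[OF X(2) _ run[OF k]] p by simp
    have "y (Suc k) \<in> X" using convexD_alt[OF X(2) p(2) xX, of "\<gamma> (Suc k)"] yd[OF k] gpos[OF k] by simp
    thus ?case using xX by simp
  qed
  have zX: "z k \<in> X" if k: "k \<in> {1..K}" for k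
  proof -
    have "x (k - 1) \<in> X" "y (k - 1) \<in> X" using mem[of "k - 1"] k by auto
    thus ?thesis using convexD_alt[OF X(2), of "y (k - 1)" "x (k - 1)" "\<gamma> k"] zd[OF k] gpos[OF k] by simp
  qed
  have ellr: "ucgs_ell f G L \<gamma> z k w = (1 - \<gamma> k) * ucgs_ell f G L \<gamma> z (k - 1) w
           + \<gamma> k * (f (z k) + inner (G (z k)) (w - z k))" if k: "k \<in> {2..K}" for k w
    by (rule ell_rec) (use k Gk[of k] grec[OF k] in \<open>auto simp: \<Gamma>_def\<close>)
  have ell1: "ucgs_ell f G L \<gamma> z 1 w = f (z 1) + inner (G (z 1)) (w - z 1)" if "K \<ge> 1" for w
    by (rule ell_one) (use that Gk[of 1] g1 in \<open>auto simp: \<Gamma>_def\<close>)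
  have P4: "k \<ge> 1 \<Longrightarrow> k \<le> K \<Longrightarrow> w \<in> X \<Longrightarrow> ucgs_ell f G L \<gamma> z k w \<le> f w" for k w
  proof (induction k)
    case 0 thus ?case by simp
  next
    case (Suc k)
    have kk: "Suc k \<in> {1..K}" using Suc by auto
    have lin: "f (z (Suc k)) + inner (G (z (Suc k))) (w - z (Suc k)) \<le> f w"
      using tangent_le[OF X(2) fconv fgrad zX[OF kk] Suc.prems(3)] .
    show ?case
    proof (cases "k = 0")
      case True thus ?thesis using ell1 lin Suc by simp
    next
      case False
      have k2: "Suc k \<in> {2..K}" using False Suc by auto
      have IH: "ucgs_ell f G L \<gamma> z k w \<le> f w" using Suc False by simp
      have "ucgs_ell f G L \<gamma> z (Suc k) w = (1 - \<gamma> (Suc k)) * ucgs_ell f G L \<gamma> z k w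
           + \<gamma> (Suc k) * (f (z (Suc k)) + inner (G (z (Suc k))) (w - z (Suc k)))"
        using ellr[OF k2] by simp
      also have "\<dots> \<le> (1 - \<gamma> (Suc k)) * f w + \<gamma> (Suc k) * f w"
        using IH lin gpos[OF kk] by (intro add_mono mult_left_mono) auto
      finally show ?thesis by (simp add: algebra_simps)
    qed
  qed
  have stp: "f (y k) \<le> (1 - \<gamma> k) * f (y (k - 1)) + \<gamma> k * (f (z k) + inner (G (z k)) (w - z k))
          + L k * (\<gamma> k)^2 / 2 * ((norm (w - x (k - 1)))^2 - (norm (w - x k))^2)
          + \<gamma> k * (L k * \<gamma> k * D^2 / real k) + \<epsilon> / 2 * \<gamma> k" if k: "k \<in> {1..K}" and w: "w \<in> X" for k w
  proof -
    have p: "x (k - 1) \<in> X" "y (k - 1) \<in> X" "x k \<in> X" using mem[of "k - 1"] mem[of k] k by auto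
    show ?thesis
      by (rule step_ineq[OF X(2) fconv fgrad p(1) p(2) w gpos(2,3)[OF k] zd[OF k] yd[OF k] _ acc[OF k]])
         (use acgm_run_props(2)[OF X(2) p(1) run[OF k]] w in blast)
  qed
  have P3: "k \<ge> 1 \<Longrightarrow> k \<le> K \<Longrightarrow> w \<in> X \<Longrightarrow> f (y k) + real k * \<Gamma> k / 2 * (norm (w - x k))^2
            \<le> ucgs_ell f G L \<gamma> z k w + 3 / 2 * real k * \<Gamma> k * D^2 + \<epsilon> / 2" for k w
  proof (induction k)
    case 0 thus ?case by simp
  next
    case (Suc k)
    have kk: "Suc k \<in> {1..K}" using Suc by auto
    have w: "w \<in> X" using Suc by simp
    define a0 where "a0 = (norm (w - x k))^2"
    define a1 where "a1 = (norm (w - x (Suc k)))^2"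
    have a0: "a0 \<le> D^2" "a0 \<ge> 0" using dist[OF w, of "x k"] mem[of k] Suc by (auto simp: a0_def)
    have e1: "L (Suc k) * (\<gamma> (Suc k))^2 = real (Suc k) * \<Gamma> (Suc k)" using Gk[OF kk] by simp
    have e2: "\<gamma> (Suc k) * (L (Suc k) * \<gamma> (Suc k) * D^2 / real (Suc k)) = \<Gamma> (Suc k) * D^2"
      using e1 by (simp add: power2_eq_square field_simps)
    have S: "f (y (Suc k)) \<le> (1 - \<gamma> (Suc k)) * f (y k) + \<gamma> (Suc k) * (f (z (Suc k)) + inner (G (z (Suc k))) (w - z (Suc k)))
          + real (Suc k) * \<Gamma> (Suc k) / 2 * (a0 - a1) + \<Gamma> (Suc k) * D^2 + \<epsilon> / 2 * \<gamma> (Suc k)"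
      using stp[OF kk w] unfolding e1 e2 a0_def a1_def by simp
    show ?case
    proof (cases "k = 0")
      case True
      have g: "\<gamma> 1 = 1" using g1 Suc by simp
      have "f (y 1) \<le> ucgs_ell f G L \<gamma> z 1 w + \<Gamma> 1 / 2 * (a0 - a1) + \<Gamma> 1 * D^2 + \<epsilon> / 2"
        using S True g ell1 Suc by simp
      moreover have "\<Gamma> 1 / 2 * a0 \<le> \<Gamma> 1 / 2 * D^2" using a0 Gk[of 1] Suc by (intro mult_left_mono) auto
      ultimately show ?thesis using True by (simp add: a1_def algebra_simps)
    next
      case False
      have k2: "Suc k \<in> {2..K}" using False Suc by auto
      have IH: "f (y k) + real k * \<Gamma> k / 2 * a0 \<le> ucgs_ell f G L \<gamma> z k w + 3 / 2 * real k * \<Gamma> k * D^2 + \<epsilon> / 2"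
        using Suc False unfolding a0_def by simp
      define g where "g = \<gamma> (Suc k)"
      have g: "0 \<le> 1 - g" "g \<le> 1" using gpos[OF kk] by (auto simp: g_def)
      have rr: "\<Gamma> (Suc k) = (1 - g) * \<Gamma> k" using grec[OF k2] by (simp add: g_def)
      have IH': "(1 - g) * f (y k) \<le> (1 - g) * (ucgs_ell f G L \<gamma> z k w + 3 / 2 * real k * \<Gamma> k * D^2 + \<epsilon> / 2 - real k * \<Gamma> k / 2 * a0)"
        using IH g by (intro mult_left_mono) auto
      have ell: "ucgs_ell f G L \<gamma> z (Suc k) w = (1 - g) * ucgs_ell f G L \<gamma> z k w
           + g * (f (z (Suc k)) + inner (G (z (Suc k))) (w - z (Suc k)))"
        using ellr[OF k2] by (simp add: g_def)
      have Gs: "\<Gamma> (Suc k) \<ge> 0" using Gk[OF kk] by simp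
      have a0': "\<Gamma> (Suc k) * a0 \<le> \<Gamma> (Suc k) * D^2" using a0 Gs by (intro mult_left_mono) auto
      have "f (y (Suc k)) + real (Suc k) * \<Gamma> (Suc k) / 2 * a1
          \<le> (1 - g) * (ucgs_ell f G L \<gamma> z k w + 3 / 2 * real k * \<Gamma> k * D^2 + \<epsilon> / 2 - real k * \<Gamma> k / 2 * a0)
            + g * (f (z (Suc k)) + inner (G (z (Suc k))) (w - z (Suc k)))
            + real (Suc k) * \<Gamma> (Suc k) / 2 * a0 + \<Gamma> (Suc k) * D^2 + \<epsilon> / 2 * g"
      proof -
        have dd: "real (Suc k) * \<Gamma> (Suc k) / 2 * (a0 - a1) = real (Suc k) * \<Gamma> (Suc k) / 2 * a0 - real (Suc k) * \<Gamma> (Suc k) / 2 * a1"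
          by (simp add: right_diff_distrib)
        show ?thesis using S IH' dd unfolding g_def by linarith
      qed
      also have "\<dots> = ucgs_ell f G L \<gamma> z (Suc k) w + (3 / 2 * real k + 1) * \<Gamma> (Suc k) * D^2 + \<epsilon> / 2
            + \<Gamma> (Suc k) / 2 * a0"
        unfolding ell rr by (simp add: algebra_simps add_divide_distrib diff_divide_distrib)
      also have "\<dots> \<le> ucgs_ell f G L \<gamma> z (Suc k) w + 3 / 2 * real (Suc k) * \<Gamma> (Suc k) * D^2 + \<epsilon> / 2"
        using a0' by (simp add: algebra_simps)
      finally show ?thesis unfolding a1_def .
    qed
  qed
  have P5: "L k < 2 * M powr (2 / (1 + \<nu>)) * \<epsilon> powr (- ((1 - \<nu>) / (1 + \<nu>))) * \<gamma> k powr (- ((1 - \<nu>) / (1 + \<nu>)))"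
    if k: "k \<in> {1..K}" for k
  proof -
    have p: "x (k - 1) \<in> X" "y (k - 1) \<in> X" using mem[of "k - 1"] k by auto
    obtain \<gamma>' z' x' y' T' where tr: "ucgs_trial G X \<sigma> D k (\<Gamma> (k - 1)) (x (k - 1)) (y (k - 1)) (L k / 2) \<gamma>' z' x' y' T'"
      and na: "\<not> ucgs_accept f G \<epsilon> (L k / 2) \<gamma>' z' y'" using fl[OF k] by blast
    have Gp: "\<Gamma> (k - 1) \<ge> 0" if "k \<noteq> 1"
    proof -
      have "k - 1 \<in> {1..K}" using that k by auto
      thus ?thesis using Gk(1)[of "k - 1"] by simp
    qed
    show ?thesis using Lbound[OF X(2) fgrad nu M holder eps p _ gok[OF k] Gp tr na] k by auto
  qed
  have P6: "real (T k) \<le> (7 * \<sigma> + 6) * real k + 1" if k: "k \<in> {1..K}" for k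
  proof -
    have p: "x (k - 1) \<in> X" using mem[of "k - 1"] k by auto
    obtain us vs where st: "acgm_steps X \<sigma> D (G (z k)) (x (k - 1)) (L k * \<gamma> k) (L k * \<gamma> k * D^2 / real k) us vs (T k)"
      using run[OF k] unfolding acgm_run_def by blast
    show ?thesis
      by (rule acgm_count[OF X D_def Dpos p _ sigma _ st]) (use gpos[OF k] k in auto)
  qed
  show "\<forall>k\<le>K. x k \<in> X \<and> y k \<in> X" using mem by blast
  show "\<forall>k\<in>{1..K}. L k > 0 \<and> 0 < \<gamma> k \<and> \<gamma> k \<le> 1 \<and> ucgs_Gamma L \<gamma> k > 0
            \<and> L k * (\<gamma> k)^2 = real k * ucgs_Gamma L \<gamma> k" using gpos Gk unfolding \<Gamma>_def by blast
  show "\<forall>k\<in>{2..K}. ucgs_Gamma L \<gamma> k = (1 - \<gamma> k) * ucgs_Gamma L \<gamma> (k - 1)" using grec unfolding \<Gamma>_def by blast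
  show "K \<ge> 1 \<longrightarrow> \<gamma> 1 = 1" using g1 .
  show "\<forall>k\<in>{1..K}. \<forall>w\<in>X. f (y k) + real k * ucgs_Gamma L \<gamma> k / 2 * (norm (w - x k))^2
            \<le> ucgs_ell f G L \<gamma> z k w + 3 / 2 * real k * ucgs_Gamma L \<gamma> k * (diameter X)^2 + \<epsilon> / 2"
    using P3 unfolding \<Gamma>_def D_def by auto
  show "\<forall>k\<in>{1..K}. \<forall>w\<in>X. ucgs_ell f G L \<gamma> z k w \<le> f w" using P4 by auto
  show "\<forall>k\<in>{1..K}. L k < 2 * M powr (2 / (1 + \<nu>)) * \<epsilon> powr (- ((1 - \<nu>) / (1 + \<nu>)))
            * \<gamma> k powr (- ((1 - \<nu>) / (1 + \<nu>)))" using P5 by blast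
  show "\<forall>k\<in>{1..K}. real (T k) \<le> (7 * \<sigma> + 6) * real k + 1" using P6 by blast
  show "\<forall>k\<in>{1..K}. s k \<in> X \<and> (\<forall>w\<in>X. ucgs_ell f G L \<gamma> z k (s k) \<le> ucgs_ell f G L \<gamma> z k w + ucgs_epsk \<sigma> (diameter X) L \<gamma> k)"
    using sk unfolding D_def by blast
qed

lemma ngrad_bound:
  fixes \<sigma> \<nu> M D \<epsilon> :: real
  assumes nu: "0 \<le> \<nu>" "\<nu> \<le> 1" and M: "M > 0" and D: "D > 0" and s: "\<sigma> \<ge> 0" and e: "\<epsilon> > 0"
  shows "4 * ((2 * M powr (2 / (1 + \<nu>)) * \<epsilon> powr (- ((1 - \<nu>) / (1 + \<nu>)))) / (\<epsilon> / ((3 + \<sigma>) * D^2)))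
            powr (1 / (2 - (1 - \<nu>) / (1 + \<nu>)))
         \<le> 8 * (((3 + \<sigma>) powr ((1 + \<nu>) / 2) * M * D powr (1 + \<nu>)) / \<epsilon>) powr (2 / (1 + 3 * \<nu>))"
proof -
  define p where "p = (1 - \<nu>) / (1 + \<nu>)"
  define q where "q = 1 / (2 - p)"
  define W where "W = (3 + \<sigma>) powr ((1 + \<nu>) / 2) * M * D powr (1 + \<nu>)"
  have nz: "1 + \<nu> > 0" "1 + 3 * \<nu> > 0" using nu by auto
  have qv: "q = (1 + \<nu>) / (1 + 3 * \<nu>)"
  proof -
    have "2 - p = (1 + 3 * \<nu>) / (1 + \<nu>)" using nz by (simp add: p_def field_simps)
    thus ?thesis using nz by (simp add: q_def)
  qed
  have q1: "0 \<le> q" "q \<le> 1" using nu nz by (auto simp: qv field_simps)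
  have Wp: "W > 0" using M D s by (simp add: W_def)
  have A: "(W / \<epsilon>) powr (2 / (1 + \<nu>)) = (3 + \<sigma>) * M powr (2 / (1 + \<nu>)) * D^2 / \<epsilon> powr (2 / (1 + \<nu>))"
  proof -
    have "(W / \<epsilon>) powr (2 / (1 + \<nu>)) = ((3 + \<sigma>) powr ((1 + \<nu>) / 2)) powr (2 / (1 + \<nu>)) * M powr (2 / (1 + \<nu>))
          * (D powr (1 + \<nu>)) powr (2 / (1 + \<nu>)) / \<epsilon> powr (2 / (1 + \<nu>))"
      by (simp add: W_def powr_mult powr_divide)
    also have "((3 + \<sigma>) powr ((1 + \<nu>) / 2)) powr (2 / (1 + \<nu>)) = 3 + \<sigma>"
    proof -
      have "(1 + \<nu>) / 2 * (2 / (1 + \<nu>)) = 1" using nz by simp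
      thus ?thesis using s by (simp only: powr_powr) simp
    qed
    also have "(D powr (1 + \<nu>)) powr (2 / (1 + \<nu>)) = D^2"
    proof -
      have "1 + \<nu> \<noteq> 0" using nz by simp
      hence "(1 + \<nu>) * (2 / (1 + \<nu>)) = 2" by (simp add: field_simps)
      hence "(D powr (1 + \<nu>)) powr (2 / (1 + \<nu>)) = D powr 2" by (simp only: powr_powr)
      thus ?thesis using D by (simp add: powr_numeral)
    qed
    finally show ?thesis by simp
  qed
  have B: "\<epsilon> powr (- p) / \<epsilon> = 1 / \<epsilon> powr (2 / (1 + \<nu>))"
  proof -
    have "\<epsilon> powr (- p) / \<epsilon> = \<epsilon> powr (- p) / \<epsilon> powr 1" using e by simp
    also have "\<dots> = \<epsilon> powr (- p - 1)" by (simp add: powr_diff)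
    also have "- p - 1 = - (2 / (1 + \<nu>))" using nz by (simp add: p_def field_simps)
    finally show ?thesis by (simp add: powr_minus divide_inverse)
  qed
  have CE: "(2 * M powr (2 / (1 + \<nu>)) * \<epsilon> powr (- p)) / (\<epsilon> / ((3 + \<sigma>) * D^2)) = 2 * (W / \<epsilon>) powr (2 / (1 + \<nu>))"
  proof -
    have "(2 * M powr (2 / (1 + \<nu>)) * \<epsilon> powr (- p)) / (\<epsilon> / ((3 + \<sigma>) * D^2))
        = 2 * (3 + \<sigma>) * M powr (2 / (1 + \<nu>)) * D^2 * (\<epsilon> powr (- p) / \<epsilon>)"
      using e by (simp add: field_simps)
    also have "\<dots> = 2 * ((3 + \<sigma>) * M powr (2 / (1 + \<nu>)) * D^2 / \<epsilon> powr (2 / (1 + \<nu>)))" unfolding B by simp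
    finally show ?thesis unfolding A .
  qed
  have "(2 * (W / \<epsilon>) powr (2 / (1 + \<nu>))) powr q = 2 powr q * (W / \<epsilon>) powr (2 / (1 + 3 * \<nu>))"
  proof -
    have n1: "1 + \<nu> \<noteq> 0" "1 + 3 * \<nu> \<noteq> 0" using nz by auto
    have gen: "\<And>a b::real. a \<noteq> 0 \<Longrightarrow> 2 / a * (a / b) = 2 / b" by simp
    have "2 / (1 + \<nu>) * q = 2 / (1 + 3 * \<nu>)" unfolding qv using gen[OF n1(1)] .
    thus ?thesis by (simp add: powr_mult powr_powr)
  qed
  moreover have "2 powr q \<le> 2" using powr_mono[of q 1 2] q1 by simp
  ultimately have "(2 * (W / \<epsilon>) powr (2 / (1 + \<nu>))) powr q \<le> 2 * (W / \<epsilon>) powr (2 / (1 + 3 * \<nu>))"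
    by (simp add: mult_right_mono)
  thus ?thesis using CE unfolding p_def[symmetric] q_def[symmetric] W_def[symmetric] by simp
qed


lemma prefix_restrict:
  "ucgs_prefix f G X \<sigma> D \<epsilon> x0 L \<gamma> z x y s T K \<Longrightarrow> K' \<le> K \<Longrightarrow> ucgs_prefix f G X \<sigma> D \<epsilon> x0 L \<gamma> z x y s T K'"
  unfolding ucgs_prefix_def by auto

lemma sumF: "(\<Sum>k=1..K. (7 * \<sigma> + 6) * real k + 2) = (7 * \<sigma> + 6) * real K * (real K + 1) / 2 + 2 * real K"
  by (induction K) (simp_all add: algebra_simps add_divide_distrib)

lemma Nlin_bound:
  fixes \<sigma> :: real
  assumes n: "real n \<le> (7 * \<sigma> + 6) * real K * (real K + 1) / 2 + 2 * real K" and K: "K \<le> N" and s: "\<sigma> \<ge> 0"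
  shows "n \<le> N_lin \<sigma> N"
proof -
  have KN: "real K \<le> real N" using K by simp
  have "real K * (real K + 1) \<le> real N * (real N + 1)" using KN by (intro mult_mono) auto
  hence "(7 * \<sigma> + 6) * (real K * (real K + 1)) \<le> (7 * \<sigma> + 6) * (real N * (real N + 1))"
    using s by (intro mult_left_mono) auto
  hence "real n \<le> (7 * \<sigma> + 6) * (real N * (real N + 1)) / 2 + 2 * real N" using n KN by (simp add: mult.assoc)
  also have "\<dots> \<le> (7/2 * \<sigma> + 3) * (real N)^2 + (7/2 * \<sigma> + 6) * real N"
    by (simp add: power2_eq_square algebra_simps)
  finally show ?thesis unfolding N_lin_def by (simp add: le_nat_iff le_ceiling_iff)
qed

theorem mainTheorem5:
  fixes X :: "'a::euclidean_space set" and f :: "'a \<Rightarrow> real" and G :: "'a \<Rightarrow> 'a"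
    and \<nu> M \<sigma> \<epsilon> :: real and x0 :: 'a
  assumes X: "X \<noteq> {}" "compact X" "convex X"
    and Xnontriv: "diameter X > 0"
    and fconv: "convex_on X f"
    and fgrad: "\<forall>x\<in>X. (f has_derivative (\<lambda>h. inner (G x) h)) (at x)"
    and nu: "0 \<le> \<nu>" "\<nu> \<le> 1" and M: "M > 0"
    and holder: "\<forall>x\<in>X. \<forall>y\<in>X. norm (G x - G y) \<le> M * norm (x - y) powr \<nu>"
    and sigma: "\<sigma> \<ge> 0" and eps: "\<epsilon> > 0" and x0: "x0 \<in> X"
  shows
    \<comment> \<open>(1) while not stopped, fewer than N_grad outer iterations have been done\<close>
    "(\<forall>K L \<gamma> z x y s T. 1 \<le> K \<and>
        ucgs_prefix f G X \<sigma> (diameter X) \<epsilon> x0 L \<gamma> z x y s T K \<and>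
        \<not> ucgs_stop f G \<sigma> (diameter X) \<epsilon> L \<gamma> z y s K
        \<longrightarrow> K + 1 \<le> N_grad \<sigma> \<nu> M (diameter X) \<epsilon>)
   \<and>
    \<comment> \<open>(2) at stopping: bounds on gradients and linear optimizations, output is an eps-solution\<close>
    (\<forall>K L \<gamma> z x y s T. 1 \<le> K \<and>
        ucgs_prefix f G X \<sigma> (diameter X) \<epsilon> x0 L \<gamma> z x y s T K \<and>
        ucgs_stop f G \<sigma> (diameter X) \<epsilon> L \<gamma> z y s K
        \<longrightarrow> K \<le> N_grad \<sigma> \<nu> M (diameter X) \<epsilon> \<and>
            (\<Sum>k=1..K. T k + 1) \<le> N_lin \<sigma> (N_grad \<sigma> \<nu> M (diameter X) \<epsilon>) \<and>
            f (y K) - (INF w\<in>X. f w) \<le> \<epsilon>)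
   \<and>
    \<comment> \<open>(3) any ACGM run in progress in iteration K stays within the linear-optimization budget\<close>
    (\<forall>K L \<gamma> z x y s T Lt \<gamma>t zt us vs t. 1 \<le> K \<and>
        ucgs_prefix f G X \<sigma> (diameter X) \<epsilon> x0 L \<gamma> z x y s T (K - 1) \<and>
        (\<forall>k\<in>{1..<K}. \<not> ucgs_stop f G \<sigma> (diameter X) \<epsilon> L \<gamma> z y s k) \<and>
        ucgs_gamma_ok K (ucgs_Gamma L \<gamma> (K - 1)) Lt \<gamma>t \<and>
        zt = (1 - \<gamma>t) *\<^sub>R y (K - 1) + \<gamma>t *\<^sub>R x (K - 1) \<and>
        acgm_steps X \<sigma> (diameter X) (G zt) (x (K - 1)) (Lt * \<gamma>t)
          (Lt * \<gamma>t * (diameter X)^2 / real K) us vs t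
        \<longrightarrow> (\<Sum>k=1..K-1. T k + 1) + t \<le> N_lin \<sigma> (N_grad \<sigma> \<nu> M (diameter X) \<epsilon>))"
proof -
  define D where "D = diameter X"
  define p where "p = (1 - \<nu>) / (1 + \<nu>)"
  define q where "q = 1 / (2 - p)"
  define C where "C = 2 * M powr (2 / (1 + \<nu>)) * \<epsilon> powr (- ((1 - \<nu>) / (1 + \<nu>)))"
  define E where "E = \<epsilon> / ((3 + \<sigma>) * D^2)"
  define XX where "XX = (((3 + \<sigma>) powr ((1 + \<nu>) / 2) * M * D powr (1 + \<nu>)) / \<epsilon>) powr (2 / (1 + 3 * \<nu>))"
  define N where "N = N_grad \<sigma> \<nu> M (diameter X) \<epsilon>"
  have Dpos: "D > 0" using Xnontriv by (simp add: D_def)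
  have Cpos: "C > 0" using M eps by (simp add: C_def)
  have Epos: "E > 0" using eps Dpos sigma by (simp add: E_def)
  have p01: "0 \<le> p" "p \<le> 1" using nu by (auto simp: p_def field_simps)
  have NX: "16 * XX \<le> real N"
    unfolding N_def N_grad_def XX_def D_def[symmetric] by (rule real_nat_ceiling_ge)
  have XXpos: "XX > 0" using M Dpos eps sigma by (simp add: XX_def)
  have N1: "N \<ge> 1" using NX XXpos by simp
  have CEX: "4 * (C / E) powr q \<le> 8 * XX"
    unfolding C_def E_def q_def p_def XX_def using ngrad_bound[OF nu M Dpos sigma eps] .
  note AN = analysis[OF X(2) X(3) Xnontriv fconv fgrad nu M holder sigma eps x0]
  have KEY: "K + 1 \<le> N" if K1: "1 \<le> K" and pre: "ucgs_prefix f G X \<sigma> (diameter X) \<epsilon> x0 L \<gamma> z x y s T K"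
      and ns: "\<not> ucgs_stop f G \<sigma> (diameter X) \<epsilon> L \<gamma> z y s K" for K L \<gamma> z x y s T
  proof -
    note A = AN[OF pre]
    have Kin: "K \<in> {1..K}" using K1 by simp
    have big: "real K * ucgs_Gamma L \<gamma> K > E"
    proof (rule ccontr)
      assume "\<not> ?thesis"
      hence le: "real K * ucgs_Gamma L \<gamma> K \<le> E" by simp
      define cc where "cc = real K * ucgs_Gamma L \<gamma> K * D^2"
      have "(3 + \<sigma>) * D^2 > 0" using sigma Dpos by simp
      hence "real K * ucgs_Gamma L \<gamma> K * ((3 + \<sigma>) * D^2) \<le> \<epsilon>"
        using le unfolding E_def by (simp add: le_divide_eq)
      hence c1: "3 * cc + \<sigma> * cc \<le> \<epsilon>" unfolding cc_def by (simp add: algebra_simps)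
      have sK: "s K \<in> X" using A(9) Kin by blast
      have P3: "f (y K) + real K * ucgs_Gamma L \<gamma> K / 2 * (norm (s K - x K))^2
            \<le> ucgs_ell f G L \<gamma> z K (s K) + 3 / 2 * real K * ucgs_Gamma L \<gamma> K * D^2 + \<epsilon> / 2"
        using A(5) Kin sK unfolding D_def by blast
      have "ucgs_Gamma L \<gamma> K > 0" using A(2) Kin by blast
      hence nn: "real K * ucgs_Gamma L \<gamma> K / 2 * (norm (s K - x K))^2 \<ge> 0" by simp
      have e3: "3 / 2 * real K * ucgs_Gamma L \<gamma> K * D^2 = 3 / 2 * cc" unfolding cc_def by simp
      have ek: "ucgs_epsk \<sigma> D L \<gamma> K = \<sigma> * cc / 2"
        using A(2) Kin unfolding ucgs_epsk_def cc_def by (simp add: mult.assoc)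
      have "f (y K) - ucgs_ell f G L \<gamma> z K (s K) \<le> \<epsilon> - ucgs_epsk \<sigma> D L \<gamma> K"
        using P3 nn c1 unfolding e3 ek by linarith
      thus False using ns unfolding ucgs_stop_def D_def by simp
    qed
    have hk: "\<forall>k\<in>{1..K}. L k > 0 \<and> 0 < \<gamma> k \<and> \<gamma> k \<le> 1 \<and> L k * (\<gamma> k)^2 = real k * ucgs_Gamma L \<gamma> k
               \<and> ucgs_Gamma L \<gamma> k > 0 \<and> L k < C * \<gamma> k powr (- p)"
      using A(2) A(7) unfolding C_def p_def by auto
    have "real K < 4 * (C / E) powr q"
      by (rule count_main[OF K1 Cpos Epos p01 q_def hk _ A(3) big]) (use A(4) K1 in simp)
    hence "2 * real K < real N" using CEX NX by linarith
    thus ?thesis using K1 by linarith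
  qed
  have KleN: "K \<le> N" if K1: "1 \<le> K" and pre: "ucgs_prefix f G X \<sigma> (diameter X) \<epsilon> x0 L \<gamma> z x y s T (K - 1)"
      and ns: "\<forall>k\<in>{1..<K}. \<not> ucgs_stop f G \<sigma> (diameter X) \<epsilon> L \<gamma> z y s k" for K L \<gamma> z x y s T
  proof (cases "K = 1")
    case True thus ?thesis using N1 by simp
  next
    case False
    hence "K - 1 \<in> {1..<K}" using K1 by auto
    hence "K - 1 + 1 \<le> N" using KEY[of "K - 1", OF _ pre] ns False K1 by auto
    thus ?thesis using K1 by simp
  qed
  show ?thesis
  proof (intro conjI allI impI)
    fix K L \<gamma> z x y s T
    assume h: "1 \<le> K \<and> ucgs_prefix f G X \<sigma> (diameter X) \<epsilon> x0 L \<gamma> z x y s T K \<and>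
        \<not> ucgs_stop f G \<sigma> (diameter X) \<epsilon> L \<gamma> z y s K"
    thus "K + 1 \<le> N_grad \<sigma> \<nu> M (diameter X) \<epsilon>" using KEY unfolding N_def by blast
  next
    fix K L \<gamma> z x y s T
    assume h: "1 \<le> K \<and> ucgs_prefix f G X \<sigma> (diameter X) \<epsilon> x0 L \<gamma> z x y s T K \<and>
        ucgs_stop f G \<sigma> (diameter X) \<epsilon> L \<gamma> z y s K"
    hence K1: "1 \<le> K" and pre: "ucgs_prefix f G X \<sigma> (diameter X) \<epsilon> x0 L \<gamma> z x y s T K"
      and st: "ucgs_stop f G \<sigma> (diameter X) \<epsilon> L \<gamma> z y s K" by auto
    note A = AN[OF pre]
    have ns: "\<forall>k\<in>{1..<K}. \<not> ucgs_stop f G \<sigma> (diameter X) \<epsilon> L \<gamma> z y s k"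
      using pre unfolding ucgs_prefix_def by blast
    have KN: "K \<le> N" using KleN[OF K1 prefix_restrict[OF pre] ns] by simp
    show "K \<le> N_grad \<sigma> \<nu> M (diameter X) \<epsilon>" using KN unfolding N_def .
    have "real (\<Sum>k=1..K. T k + 1) = (\<Sum>k=1..K. real (T k) + 1)" by (simp add: add.commute)
    also have "\<dots> \<le> (\<Sum>k=1..K. (7 * \<sigma> + 6) * real k + 2)"
      using A(8) by (intro sum_mono) fastforce
    also have "\<dots> = (7 * \<sigma> + 6) * real K * (real K + 1) / 2 + 2 * real K" by (rule sumF)
    finally show "(\<Sum>k=1..K. T k + 1) \<le> N_lin \<sigma> (N_grad \<sigma> \<nu> M (diameter X) \<epsilon>)"
      using Nlin_bound KN sigma unfolding N_def by blast
    have Kin: "K \<in> {1..K}" using K1 by simp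
    have sK: "s K \<in> X" and smin: "\<forall>w\<in>X. ucgs_ell f G L \<gamma> z K (s K) \<le> ucgs_ell f G L \<gamma> z K w + ucgs_epsk \<sigma> (diameter X) L \<gamma> K"
      using A(9) Kin by auto
    have bnd: "f (y K) - \<epsilon> \<le> f w" if w: "w \<in> X" for w
    proof -
      have "ucgs_ell f G L \<gamma> z K w \<le> f w" using A(6) Kin w by blast
      thus ?thesis using st smin w unfolding ucgs_stop_def by fastforce
    qed
    have "f (y K) - \<epsilon> \<le> (INF w\<in>X. f w)" using X(1) bnd by (intro cINF_greatest) auto
    thus "f (y K) - (INF w\<in>X. f w) \<le> \<epsilon>" by simp
  next
    fix K L \<gamma> z x y s T Lt \<gamma>t zt us vs t
    assume h: "1 \<le> K \<and>
        ucgs_prefix f G X \<sigma> (diameter X) \<epsilon> x0 L \<gamma> z x y s T (K - 1) \<and>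
        (\<forall>k\<in>{1..<K}. \<not> ucgs_stop f G \<sigma> (diameter X) \<epsilon> L \<gamma> z y s k) \<and>
        ucgs_gamma_ok K (ucgs_Gamma L \<gamma> (K - 1)) Lt \<gamma>t \<and>
        zt = (1 - \<gamma>t) *\<^sub>R y (K - 1) + \<gamma>t *\<^sub>R x (K - 1) \<and>
        acgm_steps X \<sigma> (diameter X) (G zt) (x (K - 1)) (Lt * \<gamma>t)
          (Lt * \<gamma>t * (diameter X)^2 / real K) us vs t"
    hence K1: "1 \<le> K" and pre: "ucgs_prefix f G X \<sigma> (diameter X) \<epsilon> x0 L \<gamma> z x y s T (K - 1)"
      and ns: "\<forall>k\<in>{1..<K}. \<not> ucgs_stop f G \<sigma> (diameter X) \<epsilon> L \<gamma> z y s k"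
      and gok: "ucgs_gamma_ok K (ucgs_Gamma L \<gamma> (K - 1)) Lt \<gamma>t"
      and st: "acgm_steps X \<sigma> (diameter X) (G zt) (x (K - 1)) (Lt * \<gamma>t)
          (Lt * \<gamma>t * (diameter X)^2 / real K) us vs t" by auto
    note A = AN[OF pre]
    have KN: "K \<le> N" using KleN[OF K1 pre ns] .
    have uX: "x (K - 1) \<in> X" using A(1) by blast
    have bpos: "Lt * \<gamma>t > 0" using gok unfolding ucgs_gamma_ok_def by simp
    have tb: "real t \<le> (7 * \<sigma> + 6) * real K + 1"
      using acgm_count[OF X(2) X(3) refl Xnontriv uX bpos sigma K1 st] .
    have "real (\<Sum>k=1..K-1. T k + 1) = (\<Sum>k=1..K-1. real (T k) + 1)" by (simp add: add.commute)
    also have "\<dots> \<le> (\<Sum>k=1..K-1. (7 * \<sigma> + 6) * real k + 2)"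
      using A(8) by (intro sum_mono) fastforce
    also have "\<dots> = (7 * \<sigma> + 6) * real (K - 1) * (real (K - 1) + 1) / 2 + 2 * real (K - 1)" by (rule sumF)
    finally have S1: "real (\<Sum>k=1..K-1. T k + 1) \<le> (7 * \<sigma> + 6) * real (K - 1) * (real (K - 1) + 1) / 2 + 2 * real (K - 1)" .
    have rK: "real (K - 1) = real K - 1" using K1 by simp
    have "real ((\<Sum>k=1..K-1. T k + 1) + t) \<le> (7 * \<sigma> + 6) * real (K - 1) * (real (K - 1) + 1) / 2 + 2 * real (K - 1)
          + ((7 * \<sigma> + 6) * real K + 1)" using S1 tb by simp
    also have "\<dots> \<le> (7 * \<sigma> + 6) * real K * (real K + 1) / 2 + 2 * real K"
      unfolding rK by (simp add: algebra_simps add_divide_distrib diff_divide_distrib)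
    finally show "(\<Sum>k=1..K-1. T k + 1) + t \<le> N_lin \<sigma> (N_grad \<sigma> \<nu> M (diameter X) \<epsilon>)"
      using Nlin_bound KN sigma unfolding N_def by blast
  qed
qed

end
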